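(* Let $n\ge1$ and let $\Pi\subseteq\mathfrak{D}_n$ be invariant under the CMFS-action, i.e. $\tau^c_S(\sigma)\in\Pi$ for all $\sigma\in\Pi$ and all $S\subseteq[n]$. Let $A^{(\mathsf{cyc},\mathsf{exc})}(\Pi;w,t)=\sum_{\sigma\in\Pi}w^{\mathsf{cyc}\,\sigma}t^{\mathsf{exc}\,\sigma}$. Then $$A^{(\mathsf{cyc},\mathsf{exc})}(\Pi;w,t)=\left(\frac{1+xt}{1+x}\right)^{n}P^{(\mathsf{cyc},\mathsf{cpk},\mathsf{exc})}\left(\Pi;w,\frac{(1+x)^{2}t}{(x+t)(1+xt)},\frac{x+t}{1+xt}\right),$$ equivalently, $$P^{(\mathsf{cyc},\mathsf{cpk},\mathsf{exc})}(\Pi;w,x,t)=\left(\frac{1+u}{1+uv}\right)^{n}A^{(\mathsf{cyc},\mathsf{exc})}(\Pi;w,v),$$ where $u=\frac{1+t^{2}-2xt-(1-t)\sqrt{(1+t)^{2}-4xt}}{2(1-x)t}$ and $v=\frac{(1+t)^{2}-2xt-(1+t)\sqrt{(1+t)^{2}-4xt}}{2xt}$.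
   Context: $\mathfrak{D}_n$ is the set of derangements of $[n]$. $P^{(\mathsf{stat}_1,\ldots,\mathsf{stat}_m)}(\Omega;t_1,\ldots,t_m)=\sum_{\sigma\in\Omega}\prod_jt_j^{\mathsf{stat}_j\sigma}$; $\mathsf{cyc}$ = number of cycles, $\mathsf{exc}\,\sigma=\#\{i:\sigma(i)>i\}$, $\mathsf{cpk}\,\sigma=\#\{x:\sigma^{-1}(x)<x>\sigma(x)\}$. Modified Foata–Strehl action: for a word $\rho$ of a permutation of $[n]$ with convention $\rho(0)=0,\rho(n+1)=\infty$ and $x\in[n]$, write $\rho=w_1w_2xw_3w_4$ where $w_2$ (resp. $w_3$) is the maximal contiguous factor immediately left (resp. right) of $x$ all of whose letters are smaller than $x$; $\varphi_x(\rho)=w_1w_3xw_2w_4$; $\varphi'_x(\rho)=\rho$ if $x$ is a peak of $\rho$ (i.e. its neighbors, with the convention, are both smaller) and $\varphi'_x(\rho)=\varphi_x(\rho)$ otherwise. For $\sigma\in\mathfrak{S}_n$, write each cycle starting with its largest element, order the cycles increasingly by their largest elements, and erase parentheses to get the word $\iota(\sigma)$ ($\iota$ is a bijection of $\mathfrak{S}_n$). For $\sigma\in\mathfrak{D}_n$, $\tau^c_x(\sigma)=\iota^{-1}(\varphi'_x(\iota(\sigma)))$, and for $S\subseteq[n]$, $\tau^c_S=\prod_{x\in S}\tau^c_x$ (these commuting involutions of $\mathfrak{D}_n$ define the CMFS-action of $\mathbb{Z}_2^n$). *)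

theory Defs
  imports "HOL-Analysis.Analysis" "HOL-Combinatorics.Permutations"
begin

definition derangements :: "nat \<Rightarrow> (nat \<Rightarrow> nat) set" where
  "derangements n = {\<sigma>. \<sigma> permutes {1..n} \<and> (\<forall>i\<in>{1..n}. \<sigma> i \<noteq> i)}"

definition orbit_of :: "(nat \<Rightarrow> nat) \<Rightarrow> nat \<Rightarrow> nat set" where
  "orbit_of \<sigma> i = {(\<sigma> ^^ k) i | k. True}"

definition cyc :: "nat \<Rightarrow> (nat \<Rightarrow> nat) \<Rightarrow> nat" where
  "cyc n \<sigma> = card (orbit_of \<sigma> ` {1..n})"

definition exc :: "nat \<Rightarrow> (nat \<Rightarrow> nat) \<Rightarrow> nat" where
  "exc n \<sigma> = card {i\<in>{1..n}. \<sigma> i > i}"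

definition cpk :: "nat \<Rightarrow> (nat \<Rightarrow> nat) \<Rightarrow> nat" where
  "cpk n \<sigma> = card {x\<in>{1..n}. inv \<sigma> x < x \<and> x > \<sigma> x}"

definition cycle_word :: "(nat \<Rightarrow> nat) \<Rightarrow> nat \<Rightarrow> nat list" where
  "cycle_word \<sigma> m = map (\<lambda>k. (\<sigma> ^^ k) m) [0..<card (orbit_of \<sigma> m)]"

(* iota: cycles starting with their largest element, ordered increasingly by largest element,
   parentheses erased *)
definition iota :: "nat \<Rightarrow> (nat \<Rightarrow> nat) \<Rightarrow> nat list" where
  "iota n \<sigma> = concat (map (cycle_word \<sigma>)
      (filter (\<lambda>m. m = Max (orbit_of \<sigma> m)) [1..<n+1]))"

(* position (0-based) of letter x in the word rho *)
definition pos_of :: "nat \<Rightarrow> nat list \<Rightarrow> nat" where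
  "pos_of x \<rho> = (LEAST p. p < length \<rho> \<and> \<rho> ! p = x)"

(* Modified Foata-Strehl: rho = w1 w2 x w3 w4 *)
definition fs_phi :: "nat \<Rightarrow> nat list \<Rightarrow> nat list" where
  "fs_phi x \<rho> = (let p = pos_of x \<rho>;
                     L = take p \<rho>; R = drop (Suc p) \<rho>;
                     w2 = rev (takeWhile (\<lambda>y. y < x) (rev L));
                     w1 = take (length L - length w2) L;
                     w3 = takeWhile (\<lambda>y. y < x) R;
                     w4 = dropWhile (\<lambda>y. y < x) R
                 in w1 @ w3 @ [x] @ w2 @ w4)"

(* x is a peak of rho, with rho(0) = 0 and rho(n+1) = infinity *)
definition is_peak :: "nat \<Rightarrow> nat list \<Rightarrow> bool" where
  "is_peak x \<rho> = (let p = pos_of x \<rho> in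
      (p = 0 \<or> \<rho> ! (p - 1) < x) \<and> (Suc p < length \<rho> \<and> \<rho> ! Suc p < x))"

definition fs_phi' :: "nat \<Rightarrow> nat list \<Rightarrow> nat list" where
  "fs_phi' x \<rho> = (if is_peak x \<rho> then \<rho> else fs_phi x \<rho>)"

definition tau_c :: "nat \<Rightarrow> nat \<Rightarrow> (nat \<Rightarrow> nat) \<Rightarrow> (nat \<Rightarrow> nat)" where
  "tau_c n x \<sigma> = (THE \<sigma>'. \<sigma>' permutes {1..n} \<and> iota n \<sigma>' = fs_phi' x (iota n \<sigma>))"

definition tau_c_set :: "nat \<Rightarrow> nat set \<Rightarrow> (nat \<Rightarrow> nat) \<Rightarrow> (nat \<Rightarrow> nat)" where
  "tau_c_set n S = fold (\<lambda>x f. tau_c n x \<circ> f) (sorted_list_of_set S) id"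

definition A_cyc_exc :: "nat \<Rightarrow> (nat \<Rightarrow> nat) set \<Rightarrow> real \<Rightarrow> real \<Rightarrow> real" where
  "A_cyc_exc n Pset w t = (\<Sum>\<sigma>\<in>Pset. w ^ cyc n \<sigma> * t ^ exc n \<sigma>)"

definition P_cyc_cpk_exc :: "nat \<Rightarrow> (nat \<Rightarrow> nat) set \<Rightarrow> real \<Rightarrow> real \<Rightarrow> real \<Rightarrow> real" where
  "P_cyc_cpk_exc n Pset w y t = (\<Sum>\<sigma>\<in>Pset. w ^ cyc n \<sigma> * y ^ cpk n \<sigma> * t ^ exc n \<sigma>)"

end

theory Submission
  imports Defs "HOL-Combinatorics.Multiset_Permutations"
begin

definition adj :: "'a list \<Rightarrow> 'a \<Rightarrow> 'a \<Rightarrow> bool" where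
  "adj xs a b \<longleftrightarrow> (\<exists>us vs. xs = us @ a # b # vs)"

lemma adj_Nil[simp]: "\<not> adj [] a b"
  by (auto simp: adj_def)

lemma adj_Cons: "adj (x # xs) a b \<longleftrightarrow> (xs \<noteq> [] \<and> a = x \<and> b = hd xs) \<or> adj xs a b"
proof
  assume "adj (x # xs) a b"
  then obtain us vs where h: "x # xs = us @ a # b # vs" by (auto simp: adj_def)
  show "(xs \<noteq> [] \<and> a = x \<and> b = hd xs) \<or> adj xs a b"
  proof (cases us)
    case Nil then show ?thesis using h by auto
  next
    case (Cons u us') then show ?thesis using h by (auto simp: adj_def)
  qed
next
  assume "(xs \<noteq> [] \<and> a = x \<and> b = hd xs) \<or> adj xs a b"
  then show "adj (x # xs) a b"
  proof
    assume "xs \<noteq> [] \<and> a = x \<and> b = hd xs"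
    then show ?thesis unfolding adj_def by (intro exI[of _ "[]"] exI[of _ "tl (tl (x#xs))"]) (cases xs; auto)
  next
    assume "adj xs a b"
    then obtain us vs where "xs = us @ a # b # vs" by (auto simp: adj_def)
    then show ?thesis unfolding adj_def by (intro exI[of _ "x # us"] exI[of _ vs]) auto
  qed
qed

lemma adj_single[simp]: "\<not> adj [x] a b"
  by (simp add: adj_Cons)

lemma adj_append: "adj (xs @ ys) a b \<longleftrightarrow> adj xs a b \<or> adj ys a b \<or> (xs \<noteq> [] \<and> ys \<noteq> [] \<and> a = last xs \<and> b = hd ys)"
  by (induction xs) (auto simp: adj_Cons)

lemma adj_Cons_append: "adj (x # xs @ ys) a b \<longleftrightarrow> adj (x # xs) a b \<or> adj ys a b \<or> (ys \<noteq> [] \<and> a = last (x # xs) \<and> b = hd ys)"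
  using adj_append[of "x # xs" ys] by simp

lemma adj_mem: "adj xs a b \<Longrightarrow> a \<in> set xs \<and> b \<in> set xs"
  by (auto simp: adj_def)

lemma adj_nth: "adj xs a b \<longleftrightarrow> (\<exists>i. Suc i < length xs \<and> a = xs ! i \<and> b = xs ! Suc i)"
proof
  assume "adj xs a b"
  then obtain us vs where h: "xs = us @ a # b # vs" by (auto simp: adj_def)
  show "\<exists>i. Suc i < length xs \<and> a = xs ! i \<and> b = xs ! Suc i"
    by (rule exI[of _ "length us"]) (simp add: h nth_append)
next
  assume "\<exists>i. Suc i < length xs \<and> a = xs ! i \<and> b = xs ! Suc i"
  then obtain i where i: "Suc i < length xs" "a = xs ! i" "b = xs ! Suc i" by auto
  have "xs = take i xs @ a # b # drop (Suc (Suc i)) xs"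
    using i by (metis Cons_nth_drop_Suc Suc_lessD append_take_drop_id)
  then show "adj xs a b" unfolding adj_def by blast
qed

lemma adj_distinct_last: "distinct xs \<Longrightarrow> adj xs a b \<Longrightarrow> a \<noteq> last xs"
  by (auto simp: adj_def split: if_splits)

lemma adj_distinct_hd: "distinct xs \<Longrightarrow> adj xs a b \<Longrightarrow> b \<noteq> hd xs"
  by (auto simp: adj_def hd_append split: if_splits)

definition cadj :: "'a list \<Rightarrow> 'a \<Rightarrow> 'a \<Rightarrow> bool" where
  "cadj xs a b \<longleftrightarrow> adj xs a b \<or> (xs \<noteq> [] \<and> a = last xs \<and> b = hd xs)"

(* blocks of a word: split before each left-to-right maximum *)
function blocks :: "nat list \<Rightarrow> nat list list" where
  "blocks [] = []"
| "blocks (m # r) = (m # takeWhile (\<lambda>y. y < m) r) # blocks (dropWhile (\<lambda>y. y < m) r)"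
  by pat_completeness auto
termination by (relation "Wellfounded.measure length") (auto simp: le_imp_less_Suc length_dropWhile_le)

lemma concat_blocks[simp]: "concat (blocks W) = W"
  by (induction W rule: blocks.induct) auto

definition goodblk :: "nat list \<Rightarrow> bool" where
  "goodblk B \<longleftrightarrow> B \<noteq> [] \<and> (\<forall>y\<in>set (tl B). y < hd B)"

definition goodbs :: "nat list list \<Rightarrow> bool" where
  "goodbs Bs \<longleftrightarrow> (\<forall>B\<in>set Bs. goodblk B) \<and> sorted_wrt (<) (map hd Bs)"

lemma blocks_hd_ge: "B \<in> set (blocks W) \<Longrightarrow> hd W \<le> hd B"
proof (induction W arbitrary: B rule: blocks.induct)
  case 1 then show ?case by simp
next
  case (2 m r)
  show ?case
  proof (cases "B = m # takeWhile (\<lambda>y. y < m) r")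
    case True then show ?thesis by simp
  next
    case False
    then have B: "B \<in> set (blocks (dropWhile (\<lambda>y. y < m) r))" using 2(2) by simp
    have ne: "dropWhile (\<lambda>y. y < m) r \<noteq> []"
    proof
      assume h: "dropWhile (\<lambda>y. y < m) r = []"
      have "blocks (dropWhile (\<lambda>y. y < m) r) = []" by (simp only: h blocks.simps(1))
      then show False using B by simp
    qed
    have "\<not> hd (dropWhile (\<lambda>y. y < m) r) < m" using ne hd_dropWhile by blast
    then show ?thesis using 2(1)[OF B] by simp
  qed
qed

lemma goodbs_blocks: "distinct W \<Longrightarrow> goodbs (blocks W)"
proof (induction W rule: blocks.induct)
  case 1 then show ?case by (simp add: goodbs_def)
next
  case (2 m r)
  let ?d = "dropWhile (\<lambda>y. y < m) r"
  have dd: "distinct ?d" using 2(2) by (metis distinct.simps(2) distinct_drop dropWhile_eq_drop)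
  have IH: "goodbs (blocks ?d)" using 2(1) dd by blast
  have gb: "goodblk (m # takeWhile (\<lambda>y. y < m) r)" unfolding goodblk_def
    by (auto dest: set_takeWhileD)
  have "\<forall>h\<in>set (map hd (blocks ?d)). m < h"
  proof
    fix h assume "h \<in> set (map hd (blocks ?d))"
    then obtain B where B: "B \<in> set (blocks ?d)" "h = hd B" by auto
    have ne: "?d \<noteq> []"
    proof
      assume h: "?d = []"
      have "blocks ?d = []" by (simp only: h blocks.simps(1))
      then show False using B by simp
    qed
    have "\<not> hd ?d < m" using ne hd_dropWhile by blast
    moreover have "hd ?d \<noteq> m" using 2(2) ne
      by (metis distinct.simps(2) hd_in_set set_dropWhileD)
    ultimately show "m < h" using blocks_hd_ge[OF B(1)] B(2) by simp
  qed
  then show ?case using IH gb by (simp add: goodbs_def)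
qed

lemma blocks_concat: "goodbs Bs \<Longrightarrow> blocks (concat Bs) = Bs"
proof (induction Bs)
  case Nil then show ?case by simp
next
  case (Cons B Bs)
  have gB: "goodblk B" and gBs: "goodbs Bs" and lt: "\<forall>B'\<in>set Bs. hd B < hd B'"
    using Cons(2) by (auto simp: goodbs_def)
  obtain m t where B: "B = m # t" using gB by (cases B) (auto simp: goodblk_def)
  have tl: "\<forall>y\<in>set t. y < m" using gB B by (auto simp: goodblk_def)
  have nb: "\<forall>B'\<in>set Bs. B' \<noteq> []" using gBs by (auto simp: goodbs_def goodblk_def)
  have hdc: "concat Bs = [] \<or> \<not> hd (concat Bs) < m"
  proof (cases Bs)
    case (Cons B1 Bs1)
    then have "B1 \<noteq> []" using nb by auto
    then have "hd (concat Bs) = hd B1" using Cons by simp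
    then show ?thesis using lt Cons B by auto
  qed simp
  have tw: "takeWhile (\<lambda>y. y < m) (t @ concat Bs) = t"
  proof (cases "concat Bs = []")
    case True then show ?thesis using tl by (subst True) (simp add: takeWhile_eq_all_conv)
  next
    case False then show ?thesis using tl hdc by (cases "concat Bs") (auto simp: takeWhile_append2)
  qed
  have dw: "dropWhile (\<lambda>y. y < m) (t @ concat Bs) = concat Bs"
  proof (cases "concat Bs = []")
    case True
    have "dropWhile (\<lambda>y. y < m) t = []" using tl by (simp add: dropWhile_eq_Nil_conv)
    then show ?thesis by (simp only: True append_Nil2)
  next
    case False then show ?thesis using tl hdc by (cases "concat Bs") (auto simp: dropWhile_append2)
  qed
  show ?case using Cons(1)[OF gBs] B tw dw by simp
qed

definition nx :: "nat list \<Rightarrow> nat \<Rightarrow> nat" where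
  "nx B y = the (map_of (zip B (rotate1 B)) y)"

lemma nx_nth: "distinct B \<Longrightarrow> i < length B \<Longrightarrow> nx B (B ! i) = B ! (Suc i mod length B)"
  by (simp add: nx_def map_of_zip_nth nth_rotate1)

fun pb :: "nat list list \<Rightarrow> nat \<Rightarrow> nat" where
  "pb [] y = y"
| "pb (B # Bs) y = (if y \<in> set B then nx B y else pb Bs y)"

lemma distinct_concat_mem: "distinct (concat Bs) \<Longrightarrow> B \<in> set Bs \<Longrightarrow> distinct B"
  by (auto simp: distinct_concat_iff)

lemma distinct_concat_disj: "distinct (concat Bs) \<Longrightarrow> B1 \<in> set Bs \<Longrightarrow> B2 \<in> set Bs \<Longrightarrow> y \<in> set B1 \<Longrightarrow> y \<in> set B2 \<Longrightarrow> B1 = B2"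
  by (auto simp: distinct_concat_iff)

lemma pb_in: "distinct (concat Bs) \<Longrightarrow> B \<in> set Bs \<Longrightarrow> y \<in> set B \<Longrightarrow> pb Bs y = nx B y"
  by (induction Bs) auto

lemma pb_out: "y \<notin> set (concat Bs) \<Longrightarrow> pb Bs y = y"
  by (induction Bs) auto

lemma pb_nth: "distinct (concat Bs) \<Longrightarrow> B \<in> set Bs \<Longrightarrow> i < length B \<Longrightarrow> pb Bs (B ! i) = B ! (Suc i mod length B)"
  using pb_in[of Bs B "B ! i"] nx_nth[of B i] distinct_concat_mem[of Bs B] by simp

lemma pb_pow: "distinct (concat Bs) \<Longrightarrow> B \<in> set Bs \<Longrightarrow> i < length B \<Longrightarrow> (pb Bs ^^ k) (B ! i) = B ! ((i + k) mod length B)"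
proof (induction k)
  case 0 then show ?case by simp
next
  case (Suc k)
  have L: "0 < length B" using Suc.prems(3) by linarith
  have "(pb Bs ^^ Suc k) (B ! i) = pb Bs (B ! ((i + k) mod length B))" using Suc by simp
  also have "\<dots> = B ! (Suc ((i + k) mod length B) mod length B)"
    using pb_nth[OF Suc(2,3)] L by simp
  also have "\<dots> = B ! ((i + Suc k) mod length B)" by (simp add: mod_Suc_eq)
  finally show ?case .
qed

lemma orbit_pb: assumes "distinct (concat Bs)" "B \<in> set Bs" "y \<in> set B"
  shows "orbit_of (pb Bs) y = set B"
proof -
  obtain i where i: "i < length B" "y = B ! i" using assms(3) by (auto simp: in_set_conv_nth)
  have o: "orbit_of (pb Bs) y = {B ! ((i + k) mod length B) | k. True}"
    unfolding orbit_of_def using pb_pow[OF assms(1,2) i(1)] i(2) by simp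
  show ?thesis
  proof
    have L: "0 < length B" using i(1) by linarith
    show "orbit_of (pb Bs) y \<subseteq> set B" unfolding o using L by (auto intro!: nth_mem)
  next
    show "set B \<subseteq> orbit_of (pb Bs) y"
    proof
      fix z assume "z \<in> set B"
      then obtain j where j: "j < length B" "z = B ! j" by (auto simp: in_set_conv_nth)
      have "(i + (j + length B - i)) mod length B = j" using i(1) j(1) by simp
      then show "z \<in> orbit_of (pb Bs) y" unfolding o using j(2) by (metis (mono_tags, lifting) mem_Collect_eq)
    qed
  qed
qed

lemma pb_image: assumes "distinct (concat Bs)"
  shows "pb Bs ` set (concat Bs) = set (concat Bs)"
proof
  show "pb Bs ` set (concat Bs) \<subseteq> set (concat Bs)"
  proof
    fix z assume "z \<in> pb Bs ` set (concat Bs)"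
    then obtain y B where y: "B \<in> set Bs" "y \<in> set B" "z = pb Bs y" by auto
    obtain i where i: "i < length B" "y = B ! i" using y(2) by (auto simp: in_set_conv_nth)
    have "z = B ! (Suc i mod length B)" using pb_nth[OF assms y(1) i(1)] y(3) i(2) by simp
    have L: "0 < length B" using i(1) by linarith
    have "z \<in> set B" using L \<open>z = B ! (Suc i mod length B)\<close> by (auto intro!: nth_mem)
    then show "z \<in> set (concat Bs)" using y(1) by auto
  qed
next
  show "set (concat Bs) \<subseteq> pb Bs ` set (concat Bs)"
  proof
    fix z assume "z \<in> set (concat Bs)"
    then obtain B where B: "B \<in> set Bs" "z \<in> set B" by auto
    obtain j where j: "j < length B" "z = B ! j" using B(2) by (auto simp: in_set_conv_nth)
    define i where "i = (j + length B - 1) mod length B"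
    have L: "0 < length B" using j(1) by linarith
    have il: "i < length B" using L unfolding i_def by simp
    have "Suc i mod length B = Suc (j + length B - 1) mod length B"
      unfolding i_def by (simp add: mod_Suc_eq)
    also have "Suc (j + length B - 1) = j + length B" using L by simp
    also have "(j + length B) mod length B = j" using j(1) by simp
    finally have "pb Bs (B ! i) = z" using pb_nth[OF assms B(1) il] j(2) by simp
    moreover have "B ! i \<in> set (concat Bs)" using B(1) nth_mem[OF il] by auto
    ultimately show "z \<in> pb Bs ` set (concat Bs)" by blast
  qed
qed

lemma pb_permutes: assumes "distinct (concat Bs)" shows "pb Bs permutes set (concat Bs)"
proof (rule bij_imp_permutes)
  have im: "pb Bs ` set (concat Bs) = set (concat Bs)" by (rule pb_image[OF assms])
  have c: "card (pb Bs ` set (concat Bs)) = card (set (concat Bs))" by (simp only: im)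
  have "inj_on (pb Bs) (set (concat Bs))" by (rule eq_card_imp_inj_on[OF finite_set c])
  then show "bij_betw (pb Bs) (set (concat Bs)) (set (concat Bs))" using im by (simp add: bij_betw_def)
next
  fix x assume "x \<notin> set (concat Bs)" then show "pb Bs x = x" by (rule pb_out)
qed

lemma goodbs_Max: "goodbs Bs \<Longrightarrow> B \<in> set Bs \<Longrightarrow> Max (set B) = hd B"
proof -
  assume "goodbs Bs" "B \<in> set Bs"
  then have g: "goodblk B" by (simp add: goodbs_def)
  then obtain m t where B: "B = m # t" by (cases B) (auto simp: goodblk_def)
  then have "\<forall>y\<in>set t. y < m" using g by (simp add: goodblk_def)
  then show "Max (set B) = hd B" using B by (intro Max_eqI) auto
qed

lemma iota_pb: assumes g: "goodbs Bs" and d: "distinct (concat Bs)" and s: "set (concat Bs) = {1..n}"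
  shows "iota n (pb Bs) = concat Bs"
proof -
  let ?p = "pb Bs"
  have orb: "\<And>B y. B \<in> set Bs \<Longrightarrow> y \<in> set B \<Longrightarrow> orbit_of ?p y = set B" using orbit_pb[OF d] by blast
  have ne: "\<And>B. B \<in> set Bs \<Longrightarrow> B \<noteq> []" using g by (auto simp: goodbs_def goodblk_def)
  have filt: "filter (\<lambda>m. m = Max (orbit_of ?p m)) [1..<n+1] = map hd Bs"
  proof (rule sorted_distinct_set_unique)
    show "sorted (filter (\<lambda>m. m = Max (orbit_of ?p m)) [1..<n+1])"
      using sorted_upt by (rule sorted_wrt_filter)
    show "distinct (filter (\<lambda>m. m = Max (orbit_of ?p m)) [1..<n+1])" by simp
    show "sorted (map hd Bs)" "distinct (map hd Bs)" using g by (auto simp: goodbs_def strict_sorted_iff)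
    show "set (filter (\<lambda>m. m = Max (orbit_of ?p m)) [1..<n+1]) = set (map hd Bs)"
    proof (rule set_eqI)
      fix m
      show "m \<in> set (filter (\<lambda>m. m = Max (orbit_of ?p m)) [1..<n+1]) \<longleftrightarrow> m \<in> set (map hd Bs)"
      proof
        assume "m \<in> set (filter (\<lambda>m. m = Max (orbit_of ?p m)) [1..<n+1])"
        then have m: "m \<in> {1..n}" "m = Max (orbit_of ?p m)" by auto
        then have "m \<in> set (concat Bs)" using s by simp
        then obtain B where B: "B \<in> set Bs" "m \<in> set B" by auto
        then have "m = hd B" using m(2) orb[OF B] goodbs_Max[OF g B(1)] by simp
        then show "m \<in> set (map hd Bs)" using B(1) by auto
      next
        assume "m \<in> set (map hd Bs)"
        then obtain B where B: "B \<in> set Bs" "m = hd B" by auto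
        then have mB: "m \<in> set B" using ne[OF B(1)] by simp
        then have "m \<in> {1..n}" using s B(1) by auto
        moreover have "m = Max (orbit_of ?p m)" using orb[OF B(1) mB] goodbs_Max[OF g B(1)] B(2) by simp
        ultimately show "m \<in> set (filter (\<lambda>m. m = Max (orbit_of ?p m)) [1..<n+1])"
          unfolding set_filter set_upt by auto
      qed
    qed
  qed
  have cw: "\<And>B. B \<in> set Bs \<Longrightarrow> cycle_word ?p (hd B) = B"
  proof -
    fix B assume B: "B \<in> set Bs"
    have hB: "hd B \<in> set B" "hd B = B ! 0" using ne[OF B] by (auto simp: hd_conv_nth)
    have c: "card (orbit_of ?p (hd B)) = length B"
      using orb[OF B hB(1)] distinct_card distinct_concat_mem[OF d B] by simp
    have "map (\<lambda>k. (?p ^^ k) (hd B)) [0..<length B] = map (\<lambda>k. B ! k) [0..<length B]"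
    proof (rule map_cong[OF refl])
      fix k assume "k \<in> set [0..<length B]"
      then have k: "k < length B" by simp
      show "(?p ^^ k) (hd B) = B ! k"
        using pb_pow[OF d B, of 0 k] k hB(2) ne[OF B] by simp
    qed
    also have "\<dots> = B" by (rule map_nth)
    finally show "cycle_word ?p (hd B) = B" unfolding cycle_word_def c .
  qed
  have "iota n ?p = concat (map (cycle_word ?p) (map hd Bs))" unfolding iota_def filt ..
  also have "map (cycle_word ?p) (map hd Bs) = Bs"
    by (simp add: cw map_idI)
  finally show ?thesis .
qed

lemma cyc_pb: assumes g: "goodbs Bs" and d: "distinct (concat Bs)" and s: "set (concat Bs) = {1..n}"
  shows "cyc n (pb Bs) = length Bs"
proof -
  have ne: "\<And>B. B \<in> set Bs \<Longrightarrow> B \<noteq> []" using g by (auto simp: goodbs_def goodblk_def)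
  have "orbit_of (pb Bs) ` {1..n} = set ` set Bs"
  proof
    show "orbit_of (pb Bs) ` {1..n} \<subseteq> set ` set Bs"
    proof
      fix A assume "A \<in> orbit_of (pb Bs) ` {1..n}"
      then obtain y where y: "y \<in> {1..n}" "A = orbit_of (pb Bs) y" by auto
      then have "y \<in> set (concat Bs)" using s by simp
      then obtain B where B: "B \<in> set Bs" "y \<in> set B" by auto
      then show "A \<in> set ` set Bs" using orbit_pb[OF d B] y(2) by auto
    qed
  next
    show "set ` set Bs \<subseteq> orbit_of (pb Bs) ` {1..n}"
    proof
      fix A assume "A \<in> set ` set Bs"
      then obtain B where B: "B \<in> set Bs" "A = set B" by auto
      have "hd B \<in> set B" using ne[OF B(1)] by simp
      moreover then have "hd B \<in> {1..n}" using s B(1) by auto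
      ultimately show "A \<in> orbit_of (pb Bs) ` {1..n}" using orbit_pb[OF d B(1)] B(2) by blast
    qed
  qed
  moreover have "inj_on set (set Bs)"
  proof
    fix B1 B2 assume B: "B1 \<in> set Bs" "B2 \<in> set Bs" "set B1 = set B2"
    have "hd B1 \<in> set B1" using ne[OF B(1)] by simp
    then show "B1 = B2" using distinct_concat_disj[OF d B(1,2)] B(3) by auto
  qed
  moreover have "distinct Bs"
  proof -
    have "removeAll [] Bs = Bs" using ne by (induction Bs) auto
    then show ?thesis using d by (metis distinct_concat_iff)
  qed
  ultimately show ?thesis unfolding cyc_def by (simp add: card_image distinct_card)
qed

definition perm_of :: "nat list \<Rightarrow> nat \<Rightarrow> nat" where
  "perm_of W = pb (blocks W)"

lemma word_perm: assumes "W \<in> permutations_of_set {1..n}"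
  shows "perm_of W permutes {1..n}" "iota n (perm_of W) = W"
proof -
  have d: "distinct W" and s: "set W = {1..n}" using assms by (auto simp: permutations_of_set_def)
  have g: "goodbs (blocks W)" by (rule goodbs_blocks[OF d])
  show "perm_of W permutes {1..n}" using pb_permutes[of "blocks W"] d s by (simp add: perm_of_def)
  show "iota n (perm_of W) = W" using iota_pb[OF g] d s by (simp add: perm_of_def)
qed

lemma perm_surj: assumes "\<sigma> permutes {1..n}"
  shows "\<exists>W \<in> permutations_of_set {1..n}. \<sigma> = perm_of W"
proof -
  let ?Ws = "permutations_of_set {1..n::nat}"
  let ?Ps = "{\<sigma>. \<sigma> permutes {1..n::nat}}"
  have sub: "perm_of ` ?Ws \<subseteq> ?Ps" using word_perm(1) by blast
  have inj: "inj_on perm_of ?Ws"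
    by (metis (no_types, lifting) inj_onI word_perm(2))
  have "card (perm_of ` ?Ws) = fact n" using card_image[OF inj] by simp
  moreover have "card ?Ps = fact n" using card_permutations[of "{1..n}" n] by simp
  moreover have "finite ?Ps" using finite_permutations[of "{1..n::nat}"] by simp
  ultimately have "perm_of ` ?Ws = ?Ps" using sub by (metis card_subset_eq)
  then show ?thesis using assms by blast
qed

lemma iota_word: assumes "\<sigma> permutes {1..n}"
  shows "iota n \<sigma> \<in> permutations_of_set {1..n}" "perm_of (iota n \<sigma>) = \<sigma>"
proof -
  obtain W where W: "W \<in> permutations_of_set {1..n}" "\<sigma> = perm_of W" using perm_surj[OF assms] by blast
  then show "iota n \<sigma> \<in> permutations_of_set {1..n}" "perm_of (iota n \<sigma>) = \<sigma>"
    using word_perm(2)[OF W(1)] by simp_all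
qed

lemma iota_inj: "\<sigma>1 permutes {1..n} \<Longrightarrow> \<sigma>2 permutes {1..n} \<Longrightarrow> iota n \<sigma>1 = iota n \<sigma>2 \<Longrightarrow> \<sigma>1 = \<sigma>2"
  by (metis iota_word(2))

lemma pos_of_split: "distinct (us @ x # vs) \<Longrightarrow> pos_of x (us @ x # vs) = length us"
  unfolding pos_of_def
proof (rule Least_equality)
  show "length us < length (us @ x # vs) \<and> (us @ x # vs) ! length us = x" by simp
next
  fix p assume d: "distinct (us @ x # vs)" and p: "p < length (us @ x # vs) \<and> (us @ x # vs) ! p = x"
  show "length us \<le> p"
  proof (rule ccontr)
    assume "\<not> length us \<le> p"
    then have pl: "p < length us" by simp
    then have "(us @ x # vs) ! p = us ! p" by (simp add: nth_append)
    then have "x \<in> set us" using p pl nth_mem by fastforce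
    then show False using d by simp
  qed
qed

definition decomp :: "nat \<Rightarrow> nat list \<Rightarrow> nat list \<Rightarrow> nat list \<Rightarrow> nat list \<Rightarrow> bool" where
  "decomp x w1 w2 w3 w4 \<longleftrightarrow> (\<forall>y\<in>set w2. y < x) \<and> (\<forall>y\<in>set w3. y < x)
     \<and> (w1 \<noteq> [] \<longrightarrow> \<not> last w1 < x) \<and> (w4 \<noteq> [] \<longrightarrow> \<not> hd w4 < x)"

lemma fs_phi_char: assumes d: "distinct (w1 @ w2 @ x # w3 @ w4)" and dc: "decomp x w1 w2 w3 w4"
  shows "fs_phi x (w1 @ w2 @ x # w3 @ w4) = w1 @ w3 @ x # w2 @ w4"
proof -
  let ?r = "w1 @ w2 @ x # w3 @ w4"
  have p: "pos_of x ?r = length (w1 @ w2)" using pos_of_split[of "w1 @ w2" x "w3 @ w4"] d by simp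
  have L: "take (length (w1 @ w2)) ?r = w1 @ w2" by simp
  have R: "drop (Suc (length (w1 @ w2))) ?r = w3 @ w4" by simp
  have tw2: "takeWhile (\<lambda>y. y < x) (rev (w1 @ w2)) = rev w2"
  proof (cases w1 rule: rev_cases)
    case Nil then show ?thesis using dc by (simp add: decomp_def takeWhile_eq_all_conv)
  next
    case (snoc w1' a)
    then have na: "\<not> a < x" using dc by (simp add: decomp_def)
    have a2: "\<And>y. y \<in> set (rev w2) \<Longrightarrow> y < x" using dc by (simp add: decomp_def)
    have "rev (w1 @ w2) = rev w2 @ (a # rev w1')" using snoc by simp
    then show ?thesis using takeWhile_append2[of "rev w2" "\<lambda>y. y < x" "a # rev w1'", OF a2] na by simp
  qed
  have tw3: "takeWhile (\<lambda>y. y < x) (w3 @ w4) = w3"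
  proof (cases w4)
    case Nil then show ?thesis using dc by (simp add: decomp_def takeWhile_eq_all_conv)
  next
    case (Cons a w4')
    then have "\<not> a < x" using dc by (simp add: decomp_def)
    then show ?thesis using dc Cons by (simp add: decomp_def takeWhile_append2)
  qed
  have dw3: "dropWhile (\<lambda>y. y < x) (w3 @ w4) = w4"
  proof (cases w4)
    case Nil then show ?thesis using dc by (simp add: decomp_def dropWhile_eq_Nil_conv)
  next
    case (Cons a w4')
    then have "\<not> a < x" using dc by (simp add: decomp_def)
    then show ?thesis using dc Cons by (simp add: decomp_def dropWhile_append2)
  qed
  show ?thesis unfolding fs_phi_def Let_def p L R tw2 tw3 dw3 by simp
qed

lemma decomp_exists: assumes "distinct \<rho>" "x \<in> set \<rho>"
  shows "\<exists>w1 w2 w3 w4. \<rho> = w1 @ w2 @ x # w3 @ w4 \<and> decomp x w1 w2 w3 w4"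
proof -
  obtain us vs where r: "\<rho> = us @ x # vs" using assms(2) by (metis split_list)
  define w2 where "w2 = rev (takeWhile (\<lambda>y. y < x) (rev us))"
  define w1 where "w1 = rev (dropWhile (\<lambda>y. y < x) (rev us))"
  define w3 where "w3 = takeWhile (\<lambda>y. y < x) vs"
  define w4 where "w4 = dropWhile (\<lambda>y. y < x) vs"
  have "us = rev (rev us)" by simp
  also have "\<dots> = rev (takeWhile (\<lambda>y. y < x) (rev us) @ dropWhile (\<lambda>y. y < x) (rev us))"
    by (simp only: takeWhile_dropWhile_id)
  also have "\<dots> = w1 @ w2" unfolding w1_def w2_def by (simp only: rev_append)
  finally have us: "us = w1 @ w2" .
  have vs: "vs = w3 @ w4" unfolding w3_def w4_def by simp
  have "decomp x w1 w2 w3 w4" unfolding decomp_def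
  proof (intro conjI impI)
    show "\<forall>y\<in>set w2. y < x" unfolding w2_def by (auto dest: set_takeWhileD)
    show "\<forall>y\<in>set w3. y < x" unfolding w3_def by (auto dest: set_takeWhileD)
    assume "w1 \<noteq> []"
    then have ne: "dropWhile (\<lambda>y. y < x) (rev us) \<noteq> []" unfolding w1_def by simp
    have "last w1 = hd (dropWhile (\<lambda>y. y < x) (rev us))" unfolding w1_def using ne by (simp add: last_rev)
    then show "\<not> last w1 < x" using hd_dropWhile[OF ne] by simp
  next
    assume "w4 \<noteq> []"
    then show "\<not> hd w4 < x" unfolding w4_def using hd_dropWhile by blast
  qed
  then show ?thesis using r us vs by auto
qed

lemma is_peak_split: assumes "distinct (us @ x # vs)"
  shows "is_peak x (us @ x # vs) \<longleftrightarrow> (us = [] \<or> last us < x) \<and> (vs \<noteq> [] \<and> hd vs < x)"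
proof -
  have p: "pos_of x (us @ x # vs) = length us" by (rule pos_of_split[OF assms])
  have a: "us \<noteq> [] \<Longrightarrow> (us @ x # vs) ! (length us - 1) = last us"
    by (simp add: nth_append last_conv_nth)
  have b: "vs \<noteq> [] \<Longrightarrow> (us @ x # vs) ! Suc (length us) = hd vs"
    by (simp add: nth_append hd_conv_nth)
  show ?thesis
  proof (cases "us = []")
    case True then show ?thesis unfolding is_peak_def Let_def p using b by auto
  next
    case False then show ?thesis unfolding is_peak_def Let_def p using a[OF False] b by auto
  qed
qed

lemma fs_phi'_char: assumes d: "distinct (w1 @ w2 @ x # w3 @ w4)" and dc: "decomp x w1 w2 w3 w4"
  shows "fs_phi' x (w1 @ w2 @ x # w3 @ w4) =
    (if (w1 = [] \<or> w2 \<noteq> []) \<and> w3 \<noteq> [] then w1 @ w2 @ x # w3 @ w4 else w1 @ w3 @ x # w2 @ w4)"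
proof -
  have d': "distinct ((w1 @ w2) @ x # (w3 @ w4))" using d by simp
  have l: "(w1 @ w2 = [] \<or> last (w1 @ w2) < x) \<longleftrightarrow> (w1 = [] \<or> w2 \<noteq> [])"
  proof (cases "w2 = []")
    case True
    then show ?thesis using dc by (auto simp: decomp_def)
  next
    case False
    then have "last (w1 @ w2) \<in> set w2" by simp
    then show ?thesis using dc False by (auto simp: decomp_def)
  qed
  have r: "(w3 @ w4 \<noteq> [] \<and> hd (w3 @ w4) < x) \<longleftrightarrow> w3 \<noteq> []"
  proof (cases "w3 = []")
    case True
    then show ?thesis using dc by (auto simp: decomp_def)
  next
    case False
    then have "hd (w3 @ w4) \<in> set w3" by simp
    then show ?thesis using dc False by (auto simp: decomp_def)
  qed
  have "is_peak x ((w1 @ w2) @ x # (w3 @ w4)) \<longleftrightarrow> (w1 = [] \<or> w2 \<noteq> []) \<and> w3 \<noteq> []"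
    unfolding is_peak_split[OF d'] l r ..
  then have pk: "is_peak x (w1 @ w2 @ x # w3 @ w4) \<longleftrightarrow> (w1 = [] \<or> w2 \<noteq> []) \<and> w3 \<noteq> []" by simp
  show ?thesis
  proof (cases "(w1 = [] \<or> w2 \<noteq> []) \<and> w3 \<noteq> []")
    case True
    then have "is_peak x (w1 @ w2 @ x # w3 @ w4)" using pk by blast
    then have "fs_phi' x (w1 @ w2 @ x # w3 @ w4) = w1 @ w2 @ x # w3 @ w4"
      unfolding fs_phi'_def by (rule if_P)
    then show ?thesis by (simp only: if_P[OF True])
  next
    case False
    then have "\<not> is_peak x (w1 @ w2 @ x # w3 @ w4)" using pk by blast
    then have "fs_phi' x (w1 @ w2 @ x # w3 @ w4) = fs_phi x (w1 @ w2 @ x # w3 @ w4)"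
      unfolding fs_phi'_def by (rule if_not_P)
    then show ?thesis using fs_phi_char[OF d dc] by (simp only: if_not_P[OF False])
  qed
qed

lemma fs_phi'_word: assumes "W \<in> permutations_of_set {1..n}" "x \<in> {1..n}"
  shows "fs_phi' x W \<in> permutations_of_set {1..n}"
proof -
  have d: "distinct W" and s: "set W = {1..n}" using assms by (auto simp: permutations_of_set_def)
  obtain w1 w2 w3 w4 where W: "W = w1 @ w2 @ x # w3 @ w4" and dc: "decomp x w1 w2 w3 w4"
    using decomp_exists[OF d] assms(2) s by blast
  have d': "distinct (w1 @ w2 @ x # w3 @ w4)" using d W by simp
  have m: "mset (w1 @ w3 @ x # w2 @ w4) = mset W" unfolding W by simp
  have "fs_phi' x W = W \<or> fs_phi' x W = w1 @ w3 @ x # w2 @ w4"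
  proof (cases "(w1 = [] \<or> w2 \<noteq> []) \<and> w3 \<noteq> []")
    case True then show ?thesis unfolding W fs_phi'_char[OF d' dc] by (simp only: if_P[OF True] if_True refl simp_thms)
  next
    case False then show ?thesis unfolding W fs_phi'_char[OF d' dc] by (simp only: if_not_P[OF False] if_False refl simp_thms)
  qed
  then show ?thesis
  proof
    assume "fs_phi' x W = W" then show ?thesis using assms(1) by simp
  next
    assume e: "fs_phi' x W = w1 @ w3 @ x # w2 @ w4"
    have "distinct (w1 @ w3 @ x # w2 @ w4)" using mset_eq_imp_distinct_iff[OF m] d by simp
    moreover have "set (w1 @ w3 @ x # w2 @ w4) = {1..n}" using mset_eq_setD[OF m] s by simp
    ultimately show ?thesis unfolding e by (simp add: permutations_of_set_def)
  qed
qed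

lemma tau_c_eq: assumes "\<sigma> permutes {1..n}" "x \<in> {1..n}"
  shows "tau_c n x \<sigma> = perm_of (fs_phi' x (iota n \<sigma>))"
proof -
  have w: "fs_phi' x (iota n \<sigma>) \<in> permutations_of_set {1..n}"
    by (rule fs_phi'_word[OF iota_word(1)[OF assms(1)] assms(2)])
  show ?thesis unfolding tau_c_def
  proof (rule the_equality)
    show "perm_of (fs_phi' x (iota n \<sigma>)) permutes {1..n} \<and> iota n (perm_of (fs_phi' x (iota n \<sigma>))) = fs_phi' x (iota n \<sigma>)"
      using word_perm[OF w] by simp
  next
    fix \<sigma>' assume "\<sigma>' permutes {1..n} \<and> iota n \<sigma>' = fs_phi' x (iota n \<sigma>)"
    then show "\<sigma>' = perm_of (fs_phi' x (iota n \<sigma>))"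
      using word_perm[OF w] iota_inj by metis
  qed
qed

lemma cadj_nx: assumes d: "distinct L"
  shows "cadj L a b \<longleftrightarrow> a \<in> set L \<and> b = nx L a"
proof (cases "a \<in> set L")
  case False
  then have "\<not> cadj L a b" unfolding cadj_def using adj_mem[of L a b] last_in_set[of L] by auto
  then show ?thesis using False by simp
next
  case True
  then obtain i where i: "i < length L" "a = L ! i" by (auto simp: in_set_conv_nth)
  have nxa: "nx L a = L ! (Suc i mod length L)" using nx_nth[OF d i(1)] i(2) by simp
  have adjc: "adj L a b \<longleftrightarrow> Suc i < length L \<and> b = L ! Suc i"
  proof
    assume "adj L a b"
    then obtain i' where i': "Suc i' < length L" "a = L ! i'" "b = L ! Suc i'" by (auto simp: adj_nth)
    have "i' = i" using i i' d nth_eq_iff_index_eq by (metis Suc_lessD)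
    then show "Suc i < length L \<and> b = L ! Suc i" using i' by simp
  next
    assume "Suc i < length L \<and> b = L ! Suc i"
    then show "adj L a b" unfolding adj_nth using i(2) by blast
  qed
  have ne: "L \<noteq> []" using i(1) by auto
  have lastc: "a = last L \<longleftrightarrow> Suc i = length L"
  proof -
    have "last L = L ! (length L - 1)" using ne by (simp add: last_conv_nth)
    moreover have "length L - 1 < length L" using ne by simp
    ultimately have "a = last L \<longleftrightarrow> i = length L - 1" using i d nth_eq_iff_index_eq by metis
    then show ?thesis using i(1) by auto
  qed
  show ?thesis
  proof (cases "Suc i < length L")
    case True
    then show ?thesis unfolding cadj_def adjc lastc nxa using True \<open>a \<in> set L\<close> by simp
  next
    case False
    then have e: "Suc i = length L" using i(1) by simp
    then have "Suc i mod length L = 0" by simp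
    then show ?thesis unfolding cadj_def adjc lastc nxa using e ne \<open>a \<in> set L\<close> by (simp add: hd_conv_nth)
  qed
qed

lemma nx_inj: assumes d: "distinct L" and "a \<in> set L" "a' \<in> set L" "nx L a = nx L a'"
  shows "a = a'"
proof -
  have p: "pb [L] permutes set L" using pb_permutes[of "[L]"] d by simp
  have "pb [L] a = nx L a" "pb [L] a' = nx L a'" using assms(2,3) by simp_all
  then have "pb [L] a = pb [L] a'" using assms(4) by simp
  then show ?thesis using permutes_inj[OF p] unfolding inj_def by blast
qed

lemma cadj_fun: "distinct (L :: nat list) \<Longrightarrow> cadj L a b \<Longrightarrow> cadj L a b' \<Longrightarrow> b = b'"
  by (simp add: cadj_nx)

lemma cadj_inj: assumes "distinct (L :: nat list)" "cadj L a b" "cadj L a' b" shows "a = a'"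
proof -
  have "a \<in> set L" "b = nx L a" "a' \<in> set L" "b = nx L a'" using assms cadj_nx by blast+
  then show ?thesis using nx_inj[OF assms(1)] by metis
qed

definition sq :: "nat list \<Rightarrow> nat \<Rightarrow> bool" where
  "sq L y \<longleftrightarrow> (\<forall>z. cadj L y z \<longrightarrow> y < z)"

definition sp :: "nat list \<Rightarrow> nat \<Rightarrow> bool" where
  "sp L y \<longleftrightarrow> (\<forall>a. cadj L a y \<longrightarrow> a < y)"

lemma sq_wit: "distinct L \<Longrightarrow> cadj L y z \<Longrightarrow> sq L y \<longleftrightarrow> y < z"
  unfolding sq_def using cadj_fun by metis

lemma sp_wit: "distinct L \<Longrightarrow> cadj L a y \<Longrightarrow> sp L y \<longleftrightarrow> a < y"
  unfolding sp_def using cadj_inj by metis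

lemma block_move:
  fixes b1 w b4 :: "nat list" and j :: nat
  defines "L \<equiv> b1 @ j # w @ b4" and "L' \<equiv> b1 @ w @ j # b4"
  assumes d: "distinct L" and b1: "b1 \<noteq> []" and wne: "w \<noteq> []" and wl: "\<forall>y\<in>set w. y < j"
    and lb1: "j < last b1" and hb4: "b4 \<noteq> [] \<longrightarrow> j < hd b4" and hb1: "j < hd b1"
  shows "\<forall>y\<in>set L. y \<noteq> j \<longrightarrow> (sq L y \<longleftrightarrow> sq L' y) \<and> (sp L y \<longleftrightarrow> sp L' y)"
    and "\<not> sq L j" "\<not> sp L j" "sq L' j" "sp L' j"
proof -
  define c where "c = (if b4 = [] then hd b1 else hd b4)"
  have jc: "j < c" unfolding c_def using hb4 hb1 by auto
  have hw: "hd w < j" "last w < j" using wl wne by auto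
  have d': "distinct L'"
  proof -
    have "mset L' = mset L" unfolding L_def L'_def by simp
    then show ?thesis using d mset_eq_imp_distinct_iff by blast
  qed
  have c1: "cadj L a b \<longleftrightarrow> adj b1 a b \<or> adj w a b \<or> adj b4 a b \<or> (a = last b1 \<and> b = j) \<or> (a = j \<and> b = hd w)
     \<or> (a = last w \<and> b = c) \<or> (b4 \<noteq> [] \<and> a = last b4 \<and> b = hd b1)" for a b
    unfolding L_def c_def cadj_def using b1 wne
    by (cases "b4 = []") (auto simp: adj_append adj_Cons)
  have c2: "cadj L' a b \<longleftrightarrow> adj b1 a b \<or> adj w a b \<or> adj b4 a b \<or> (a = last b1 \<and> b = hd w) \<or> (a = last w \<and> b = j)
     \<or> (a = j \<and> b = c) \<or> (b4 \<noteq> [] \<and> a = last b4 \<and> b = hd b1)" for a b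
    unfolding L'_def c_def cadj_def using b1 wne
    by (cases "b4 = []") (auto simp: adj_append adj_Cons)
  show "\<not> sq L j" using sq_wit[OF d, of j "hd w"] c1 hw by simp
  show "\<not> sp L j" using sp_wit[OF d, of "last b1" j] c1 lb1 by simp
  show "sq L' j" using sq_wit[OF d', of j c] c2 jc by simp
  show "sp L' j" using sp_wit[OF d', of "last w" j] c2 hw by simp
  show "\<forall>y\<in>set L. y \<noteq> j \<longrightarrow> (sq L y \<longleftrightarrow> sq L' y) \<and> (sp L y \<longleftrightarrow> sp L' y)"
  proof (intro ballI impI conjI)
    fix y assume y: "y \<in> set L" "y \<noteq> j"
    show "sq L y \<longleftrightarrow> sq L' y"
    proof -
      consider "y = last b1" | "y = last w" | "y \<noteq> last b1" "y \<noteq> last w" by blast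
      then show ?thesis
      proof cases
        case 1
        have "\<not> sq L y" using sq_wit[OF d, of y j] c1 1 lb1 by simp
        moreover have "\<not> sq L' y" using sq_wit[OF d', of y "hd w"] c2 1 lb1 hw by simp
        ultimately show ?thesis by simp
      next
        case 2
        have "sq L y" using sq_wit[OF d, of y c] c1 2 jc hw by simp
        moreover have "sq L' y" using sq_wit[OF d', of y j] c2 2 hw by simp
        ultimately show ?thesis by simp
      next
        case 3
        then show ?thesis unfolding sq_def using c1 c2 y(2) by simp
      qed
    qed
    show "sp L y \<longleftrightarrow> sp L' y"
    proof -
      consider "y = hd w" | "y = c" | "y \<noteq> hd w" "y \<noteq> c" by blast
      then show ?thesis
      proof cases
        case 1
        have "\<not> sp L y" using sp_wit[OF d, of j y] c1 1 hw by simp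
        moreover have "\<not> sp L' y" using sp_wit[OF d', of "last b1" y] c2 1 lb1 hw by simp
        ultimately show ?thesis by simp
      next
        case 2
        have "sp L y" using sp_wit[OF d, of "last w" y] c1 2 jc hw by simp
        moreover have "sp L' y" using sp_wit[OF d', of j y] c2 2 jc by simp
        ultimately show ?thesis by simp
      next
        case 3
        then show ?thesis unfolding sp_def using c1 c2 y(2) by simp
      qed
    qed
  qed
qed

lemma stats_pb: assumes d: "distinct (concat Bs)" and B: "B \<in> set Bs" and y: "y \<in> set B"
  shows "y < pb Bs y \<longleftrightarrow> sq B y" "inv (pb Bs) y < y \<longleftrightarrow> sp B y"
proof -
  have dB: "distinct B" by (rule distinct_concat_mem[OF d B])
  have e: "pb Bs y = nx B y" by (rule pb_in[OF d B y])
  have "cadj B y (nx B y)" using cadj_nx[OF dB] y by simp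
  then show "y < pb Bs y \<longleftrightarrow> sq B y" using sq_wit[OF dB] e by simp
  have "y \<in> pb [B] ` set (concat [B])" using pb_image[of "[B]"] dB y by simp
  then obtain a where a: "a \<in> set B" "pb [B] a = y" by auto
  then have a2: "nx B a = y" by simp
  have "pb Bs a = y" using pb_in[OF d B a(1)] a2 by simp
  moreover have perm: "pb Bs permutes set (concat Bs)" by (rule pb_permutes[OF d])
  ultimately have "inv (pb Bs) y = a" using permutes_inv_eq[OF perm] by simp
  moreover have "cadj B a y" using cadj_nx[OF dB] a(1) a2 by simp
  ultimately show "inv (pb Bs) y < y \<longleftrightarrow> sp B y" using sp_wit[OF dB] by simp
qed

lemma derange_blocks: assumes "\<sigma> \<in> derangements n"
  shows "goodbs (blocks (iota n \<sigma>))" "distinct (concat (blocks (iota n \<sigma>)))"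
    "set (concat (blocks (iota n \<sigma>))) = {1..n}" "\<sigma> = pb (blocks (iota n \<sigma>))"
    "\<forall>B\<in>set (blocks (iota n \<sigma>)). 2 \<le> length B" "\<sigma> permutes {1..n}"
proof -
  have perm: "\<sigma> permutes {1..n}" and der: "\<forall>i\<in>{1..n}. \<sigma> i \<noteq> i" using assms by (auto simp: derangements_def)
  have w: "iota n \<sigma> \<in> permutations_of_set {1..n}" "perm_of (iota n \<sigma>) = \<sigma>" using iota_word[OF perm] by auto
  then have d: "distinct (iota n \<sigma>)" and s: "set (iota n \<sigma>) = {1..n}" by (auto simp: permutations_of_set_def)
  show g: "goodbs (blocks (iota n \<sigma>))" by (rule goodbs_blocks[OF d])
  show d2: "distinct (concat (blocks (iota n \<sigma>)))" using d by simp
  show "set (concat (blocks (iota n \<sigma>))) = {1..n}" using s by simp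
  show e: "\<sigma> = pb (blocks (iota n \<sigma>))" using w(2) by (simp add: perm_of_def)
  show "\<sigma> permutes {1..n}" by (rule perm)
  show "\<forall>B\<in>set (blocks (iota n \<sigma>)). 2 \<le> length B"
  proof
    fix B assume B: "B \<in> set (blocks (iota n \<sigma>))"
    have ne: "B \<noteq> []" using g B by (auto simp: goodbs_def goodblk_def)
    show "2 \<le> length B"
    proof (rule ccontr)
      assume "\<not> 2 \<le> length B"
      then obtain m where m: "B = [m]" using ne by (cases B) (auto simp: Suc_le_eq)
      have "\<sigma> m = nx B m" using pb_in[OF d2 B] m e by simp
      also have "\<dots> = m" using nx_nth[of B 0] m by simp
      finally have "\<sigma> m = m" .
      moreover have "m \<in> {1..n}" using B m s by (metis concat_blocks in_set_conv_decomp concat_append concat.simps(2) list.set_intros(1) set_append UnI1 UnI2 Un_iff)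
      ultimately show False using der by blast
    qed
  qed
qed

lemma goodbs_le_hd: assumes "goodbs Bs" "B \<in> set Bs" "y \<in> set B" shows "y \<le> hd B"
proof -
  have gb: "B \<noteq> [] \<and> (\<forall>y\<in>set (tl B). y < hd B)" using assms(1,2) by (simp add: goodbs_def goodblk_def)
  show ?thesis
  proof (cases "y = hd B")
    case True then show ?thesis by simp
  next
    case False
    then have "y \<in> set (tl B)" using assms(3) gb by (cases B) auto
    then show ?thesis using gb by fastforce
  qed
qed

lemma goodbs_hd_less: "goodbs Bs \<Longrightarrow> i < k \<Longrightarrow> k < length Bs \<Longrightarrow> hd (Bs ! i) < hd (Bs ! k)"
  unfolding goodbs_def using sorted_wrt_nth_less[of "(<)" "map hd Bs" i k] by simp

lemma goodbs_pre: assumes g: "goodbs Bs" and k: "k < length Bs" and y: "y \<in> set (concat (take k Bs))"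
  shows "y < hd (Bs ! k)"
proof -
  obtain C where C: "C \<in> set (take k Bs)" "y \<in> set C" using y by auto
  then obtain i where i: "i < length (take k Bs)" "take k Bs ! i = C" by (auto simp: in_set_conv_nth)
  then have ik: "i < k" "Bs ! i = C" using k by auto
  have "C \<in> set Bs" using ik k by auto
  then have "y \<le> hd C" using goodbs_le_hd[OF g] C(2) by blast
  also have "hd C < hd (Bs ! k)" using goodbs_hd_less[OF g ik(1) k] ik(2) by simp
  finally show ?thesis .
qed

lemma goodbs_post: assumes g: "goodbs Bs" and k: "k < length Bs" and ne: "concat (drop (Suc k) Bs) \<noteq> []"
  shows "hd (Bs ! k) < hd (concat (drop (Suc k) Bs))"
proof -
  have sk: "Suc k < length Bs" using ne by (metis drop_all concat.simps(1) not_le)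
  then have dr: "drop (Suc k) Bs = Bs ! Suc k # drop (Suc (Suc k)) Bs" by (simp add: Cons_nth_drop_Suc)
  have "Bs ! Suc k \<in> set Bs" using sk by simp
  then have "Bs ! Suc k \<noteq> []" using g by (auto simp: goodbs_def goodblk_def)
  then have "hd (concat (drop (Suc k) Bs)) = hd (Bs ! Suc k)" using dr by simp
  then show ?thesis using goodbs_hd_less[OF g _ sk, of k] by simp
qed

lemma concat_split: "k < length Bs \<Longrightarrow> concat Bs = concat (take k Bs) @ Bs ! k @ concat (drop (Suc k) Bs)"
  by (metis concat.simps(2) concat_append id_take_nth_drop)

lemma phi_blocks: assumes g: "goodbs Bs" and d: "distinct (concat Bs)" and k: "k < length Bs"
    and B: "Bs ! k = b1 @ w2 @ j # w3 @ b4" and b1: "b1 \<noteq> []" and dc: "decomp j b1 w2 w3 b4"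
  shows "fs_phi' j (concat Bs) = concat (take k Bs) @
     (if w2 \<noteq> [] \<and> w3 \<noteq> [] then Bs ! k else b1 @ w3 @ j # w2 @ b4) @ concat (drop (Suc k) Bs)"
proof -
  let ?pre = "concat (take k Bs)" and ?post = "concat (drop (Suc k) Bs)"
  have Bin: "Bs ! k \<in> set Bs" using k by simp
  have dB: "distinct (Bs ! k)" by (rule distinct_concat_mem[OF d Bin])
  have jt: "j \<in> set (tl (Bs ! k))" using B b1 dB by (cases b1) auto
  have jh: "j < hd (Bs ! k)" using g Bin jt by (auto simp: goodbs_def goodblk_def)
  have V: "concat Bs = (?pre @ b1) @ w2 @ j # w3 @ (b4 @ ?post)"
    using concat_split[OF k] B by simp
  have dc2: "decomp j (?pre @ b1) w2 w3 (b4 @ ?post)"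
    unfolding decomp_def
  proof (intro conjI impI)
    show "\<forall>y\<in>set w2. y < j" "\<forall>y\<in>set w3. y < j" using dc by (auto simp: decomp_def)
    show "\<not> last (?pre @ b1) < j" using dc b1 by (simp add: decomp_def)
    assume ne: "b4 @ ?post \<noteq> []"
    show "\<not> hd (b4 @ ?post) < j"
    proof (cases "b4 = []")
      case True
      then have "?post \<noteq> []" using ne by simp
      then have "hd (Bs ! k) < hd ?post" by (rule goodbs_post[OF g k])
      then show ?thesis using True jh by simp
    next
      case False then show ?thesis using dc by (simp add: decomp_def)
    qed
  qed
  have dV: "distinct ((?pre @ b1) @ w2 @ j # w3 @ (b4 @ ?post))" using d V by simp
  have "fs_phi' j (concat Bs) = (if (?pre @ b1 = [] \<or> w2 \<noteq> []) \<and> w3 \<noteq> [] then (?pre @ b1) @ w2 @ j # w3 @ (b4 @ ?post)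
          else (?pre @ b1) @ w3 @ j # w2 @ (b4 @ ?post))"
    unfolding V by (rule fs_phi'_char[OF dV dc2])
  moreover have "(?pre @ b1 = [] \<or> w2 \<noteq> []) \<longleftrightarrow> w2 \<noteq> []" using b1 by simp
  ultimately show ?thesis using B by simp
qed

lemma main_step:
  assumes \<sigma>: "\<sigma> \<in> derangements n" and j: "j \<in> {1..n}"
  defines "\<sigma>' \<equiv> tau_c n j \<sigma>"
  shows "tau_c n j \<sigma>' = \<sigma> \<and> (((inv \<sigma> j < j) \<noteq> (j < \<sigma> j) \<and> \<sigma>' = \<sigma>) \<or>
     ((inv \<sigma> j < j) = (j < \<sigma> j) \<and> cyc n \<sigma>' = cyc n \<sigma> \<and>
      (\<forall>y\<in>{1..n}. y \<noteq> j \<longrightarrow> (inv \<sigma>' y < y \<longleftrightarrow> inv \<sigma> y < y) \<and> (y < \<sigma>' y \<longleftrightarrow> y < \<sigma> y)) \<and>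
      (inv \<sigma>' j < j \<longleftrightarrow> \<not> inv \<sigma> j < j) \<and> (j < \<sigma>' j \<longleftrightarrow> \<not> j < \<sigma> j)))"
proof -
  define V where "V = iota n \<sigma>"
  define Bs where "Bs = blocks V"
  have g: "goodbs Bs" and d: "distinct (concat Bs)" and s: "set (concat Bs) = {1..n}" and e: "\<sigma> = pb Bs"
    and l2: "\<forall>B\<in>set Bs. 2 \<le> length B" and perm: "\<sigma> permutes {1..n}"
    using derange_blocks[OF \<sigma>] unfolding Bs_def V_def by auto
  have cV: "concat Bs = V" unfolding Bs_def by simp
  have tau: "\<sigma>' = perm_of (fs_phi' j V)" unfolding \<sigma>'_def V_def by (rule tau_c_eq[OF perm j])
  have pV: "perm_of V = \<sigma>" unfolding perm_of_def Bs_def[symmetric] using e by simp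
  have "j \<in> set (concat Bs)" using s j by simp
  then obtain B0 where B0: "B0 \<in> set Bs" "j \<in> set B0" by auto
  then obtain k where k: "k < length Bs" "Bs ! k = B0" by (auto simp: in_set_conv_nth)
  define B where "B = Bs ! k"
  have Bin: "B \<in> set Bs" unfolding B_def using k(1) by simp
  have jB: "j \<in> set B" unfolding B_def using k B0 by simp
  have dB: "distinct B" by (rule distinct_concat_mem[OF d Bin])
  have gB: "goodblk B" using g Bin by (simp add: goodbs_def)
  have ne: "B \<noteq> []" using gB by (simp add: goodblk_def)
  have len: "2 \<le> length B" using l2 Bin by simp
  define pre where "pre = concat (take k Bs)"
  define post where "post = concat (drop (Suc k) Bs)"
  have Vs: "V = pre @ B @ post" unfolding pre_def post_def B_def using concat_split[OF k(1)] cV by simp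
  have stB: "\<And>y. y \<in> set B \<Longrightarrow> (y < \<sigma> y \<longleftrightarrow> sq B y) \<and> (inv \<sigma> y < y \<longleftrightarrow> sp B y)"
    using stats_pb[OF d Bin] e by simp
  have fixcase: "?thesis" if fx: "fs_phi' j V = V" and pq: "(inv \<sigma> j < j) \<noteq> (j < \<sigma> j)"
  proof -
    have "\<sigma>' = \<sigma>" using tau fx pV by simp
    then have "tau_c n j \<sigma>' = \<sigma>" using \<sigma>'_def by simp
    then show ?thesis using pq \<open>\<sigma>' = \<sigma>\<close> by blast
  qed
  show ?thesis
  proof (cases "j = hd B")
    case True
    obtain t where Bt: "B = j # t" using ne True by (cases B) auto
    have tne: "t \<noteq> []" using len Bt by auto
    have tl: "\<forall>y\<in>set t. y < j" using gB Bt by (simp add: goodblk_def)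
    have dc: "decomp j [] pre t post" unfolding decomp_def
    proof (intro conjI impI)
      show "\<forall>y\<in>set pre. y < j" using goodbs_pre[OF g k(1)] True unfolding pre_def B_def by simp
      show "\<forall>y\<in>set t. y < j" by (rule tl)
      show "[] \<noteq> [] \<Longrightarrow> \<not> last [] < j" by simp
      assume "post \<noteq> []"
      then show "\<not> hd post < j" using goodbs_post[OF g k(1)] True unfolding post_def B_def by simp
    qed
    have dV: "distinct ([] @ pre @ j # t @ post)" using d cV Vs Bt by simp
    have "fs_phi' j ([] @ pre @ j # t @ post) = [] @ pre @ j # t @ post"
      using fs_phi'_char[OF dV dc] tne by simp
    then have fx: "fs_phi' j V = V" using Vs Bt by simp
    have "cadj B (last t) j" using Bt tne by (simp add: cadj_def)
    then have spj: "sp B j" using sp_wit[OF dB] tl tne by simp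
    have "cadj B j (hd t)" using Bt tne by (simp add: cadj_def adj_Cons)
    moreover have "hd t < j" using tl hd_in_set[OF tne] by blast
    ultimately have "\<not> sq B j" using sq_wit[OF dB] by simp
    then have "(inv \<sigma> j < j) \<noteq> (j < \<sigma> j)" using stB[OF jB] spj by simp
    then show ?thesis using fixcase fx by blast
  next
    case False
    have jt: "j \<in> set (tl B)" using jB ne False by (cases B) auto
    have jh: "j < hd B" using gB jt by (simp add: goodblk_def)
    obtain b1 w2 w3 b4 where Bd: "B = b1 @ w2 @ j # w3 @ b4" and dc: "decomp j b1 w2 w3 b4"
      using decomp_exists[OF dB jB] by blast
    have w2l: "\<forall>y\<in>set w2. y < j" and w3l: "\<forall>y\<in>set w3. y < j" using dc by (auto simp: decomp_def)
    have b1: "b1 \<noteq> []"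
    proof
      assume b1e: "b1 = []"
      show False
      proof (cases "w2 = []")
        case True then show ?thesis using b1e Bd jh by simp
      next
        case False then have "hd B = hd w2" using b1e Bd by simp
        moreover have "hd w2 < j" using w2l hd_in_set[OF False] by blast
        ultimately show ?thesis using jh by simp
      qed
    qed
    have hb1: "hd b1 = hd B" using Bd b1 by simp
    have jb1: "j \<notin> set b1" "j \<notin> set b4" using dB Bd by auto
    have lb1: "j < last b1"
    proof -
      have "\<not> last b1 < j" using dc b1 by (simp add: decomp_def)
      moreover have "last b1 \<noteq> j" using jb1 b1 last_in_set by metis
      ultimately show ?thesis by simp
    qed
    have hb4: "b4 \<noteq> [] \<longrightarrow> j < hd b4"
    proof
      assume b4: "b4 \<noteq> []"
      have "\<not> hd b4 < j" using dc b4 by (simp add: decomp_def)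
      moreover have "hd b4 \<noteq> j" using jb1 b4 hd_in_set by metis
      ultimately show "j < hd b4" by simp
    qed
    have hb1j: "j < hd b1" using hb1 jh by simp
    have phiV: "fs_phi' j V = pre @ (if w2 \<noteq> [] \<and> w3 \<noteq> [] then B else b1 @ w3 @ j # w2 @ b4) @ post"
      using phi_blocks[OF g d k(1) _ b1 dc] Bd unfolding pre_def post_def B_def cV by simp
    consider (pk) "w2 \<noteq> [] \<and> w3 \<noteq> []" | (vl) "w2 = [] \<and> w3 = []" | (mv) "(w2 = [] \<and> w3 \<noteq> []) \<or> (w2 \<noteq> [] \<and> w3 = [])"
      by blast
    then show ?thesis
    proof cases
      case pk
      have fx: "fs_phi' j V = V" using phiV pk Vs by simp
      have "cadj B (last w2) j" using Bd pk by (simp add: cadj_def adj_append adj_Cons)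
      then have spj: "sp B j" using sp_wit[OF dB] w2l pk by simp
      have "cadj B j (hd w3)" using Bd pk by (simp add: cadj_def adj_append adj_Cons)
      moreover have "hd w3 < j" using w3l hd_in_set pk by blast
      ultimately have "\<not> sq B j" using sq_wit[OF dB] by simp
      then have "(inv \<sigma> j < j) \<noteq> (j < \<sigma> j)" using stB[OF jB] spj by simp
      then show ?thesis using fixcase fx by blast
    next
      case vl
      have fx: "fs_phi' j V = V" using phiV vl Vs Bd by simp
      have "cadj B (last b1) j" using Bd vl b1 by (simp add: cadj_def adj_append adj_Cons)
      then have "\<not> sp B j" using sp_wit[OF dB] lb1 by simp
      moreover have "cadj B j (if b4 = [] then hd b1 else hd b4)" using Bd vl b1
        by (cases "b4 = []") (simp_all add: cadj_def adj_append adj_Cons)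
      then have "sq B j" using sq_wit[OF dB] hb4 hb1j by (cases "b4 = []") simp_all
      ultimately have "(inv \<sigma> j < j) \<noteq> (j < \<sigma> j)" using stB[OF jB] by simp
      then show ?thesis using fixcase fx by blast
    next
      case mv
      define B' where "B' = b1 @ w3 @ j # w2 @ b4"
      define Bs' where "Bs' = Bs[k := B']"
      have nc: "\<not> (w2 \<noteq> [] \<and> w3 \<noteq> [])" using mv by blast
      have fV: "fs_phi' j V = pre @ B' @ post" using phiV[unfolded if_not_P[OF nc]] unfolding B'_def .
      have mB: "mset B' = mset B" unfolding B'_def Bd by simp
      have dB': "distinct B'" using mB dB mset_eq_imp_distinct_iff by blast
      have sB: "set B' = set B" using mB mset_eq_setD by blast
      have hB': "hd B' = hd B" unfolding B'_def using hb1 b1 by simp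
      have lk: "length Bs' = length Bs" "Bs' ! k = B'" unfolding Bs'_def using k(1) by simp_all
      have oth: "\<And>i. i \<noteq> k \<Longrightarrow> Bs' ! i = Bs ! i" unfolding Bs'_def by simp
      have tk: "take k Bs' = take k Bs" unfolding Bs'_def by simp
      have dk: "drop (Suc k) Bs' = drop (Suc k) Bs" unfolding Bs'_def by simp
      have cBs': "concat Bs' = pre @ B' @ post"
        using concat_split[of k Bs'] k(1) lk tk dk unfolding pre_def post_def by simp
      have gB': "goodblk B'"
      proof -
        have "set (tl B') = set (tl B)"
        proof -
          obtain m r where mr: "b1 = m # r" using b1 by (cases b1) auto
          show ?thesis unfolding B'_def using Bd mr by auto
        qed
        moreover have "B' \<noteq> []" unfolding B'_def using b1 by simp
        moreover have "\<forall>y\<in>set (tl B). y < hd B" using gB by (simp add: goodblk_def)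
        ultimately show ?thesis unfolding goodblk_def using hB' by simp
      qed
      have g': "goodbs Bs'"
      proof -
        have "\<forall>C\<in>set Bs'. goodblk C"
        proof
          fix C assume "C \<in> set Bs'"
          then have "C \<in> set (Bs[k := B'])" by (simp only: Bs'_def)
          then have "C \<in> insert B' (set Bs)" by (rule subsetD[OF set_update_subset_insert])
          then show "goodblk C" using gB' g by (auto simp: goodbs_def)
        qed
        moreover have "map hd Bs' = map hd Bs"
        proof -
          have hh: "hd B' = map hd Bs ! k" using hB' B_def k(1) by simp
          show ?thesis unfolding Bs'_def map_update by (simp only: hh list_update_id)
        qed
        ultimately show ?thesis using g by (simp add: goodbs_def)
      qed
      have mc: "mset (concat Bs') = mset (concat Bs)" using cBs' cV Vs mB by simp
      have d': "distinct (concat Bs')" using mc d mset_eq_imp_distinct_iff by blast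
      have s': "set (concat Bs') = {1..n}" using mc s mset_eq_setD by metis
      have e': "\<sigma>' = pb Bs'"
        using tau fV cBs' blocks_concat[OF g'] unfolding perm_of_def by simp
      have perm': "\<sigma>' permutes {1..n}" using pb_permutes[OF d'] s' e' by simp
      have iota': "iota n \<sigma>' = concat Bs'" using iota_pb[OF g' d' s'] e' by simp
      have B'd: "Bs' ! k = b1 @ w3 @ j # w2 @ b4" using lk B'_def by simp
      have dc': "decomp j b1 w3 w2 b4" using dc by (auto simp: decomp_def)
      have k': "k < length Bs'" using lk k(1) by simp
      have "fs_phi' j (concat Bs') = concat (take k Bs') @
            (if w3 \<noteq> [] \<and> w2 \<noteq> [] then Bs' ! k else b1 @ w2 @ j # w3 @ b4) @ concat (drop (Suc k) Bs')"
        by (rule phi_blocks[OF g' d' k' B'd b1 dc'])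
      also have "\<dots> = V"
      proof -
        have nc2: "\<not> (w3 \<noteq> [] \<and> w2 \<noteq> [])" using mv by blast
        have "concat (take k Bs') = pre" unfolding pre_def tk ..
        moreover have "concat (drop (Suc k) Bs') = post" unfolding post_def dk ..
        ultimately show ?thesis unfolding if_not_P[OF nc2] using Vs Bd by simp
      qed
      finally have inv1: "tau_c n j \<sigma>' = \<sigma>" using tau_c_eq[OF perm' j] iota' pV by simp
      have cyc1: "cyc n \<sigma>' = cyc n \<sigma>" using cyc_pb[OF g' d' s'] cyc_pb[OF g d s] e e' lk by simp
      have B'in: "B' \<in> set Bs'" using lk k(1) by (metis nth_mem)
      have stB': "\<And>y. y \<in> set B' \<Longrightarrow> (y < \<sigma>' y \<longleftrightarrow> sq B' y) \<and> (inv \<sigma>' y < y \<longleftrightarrow> sp B' y)"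
        using stats_pb[OF d' B'in] e' by simp
      have BM: "(\<forall>y\<in>set B. y \<noteq> j \<longrightarrow> (sq B' y \<longleftrightarrow> sq B y) \<and> (sp B' y \<longleftrightarrow> sp B y))
          \<and> (sq B j \<longleftrightarrow> sp B j) \<and> (sq B' j \<longleftrightarrow> \<not> sq B j) \<and> (sp B' j \<longleftrightarrow> \<not> sp B j)"
      proof (cases "w2 = []")
        case True
        then have w3: "w3 \<noteq> []" using mv by simp
        have BB: "B = b1 @ j # w3 @ b4" "B' = b1 @ w3 @ j # b4" using Bd B'_def True by simp_all
        have dL: "distinct (b1 @ j # w3 @ b4)" using dB BB by simp
        note bm = block_move[OF dL b1 w3 w3l lb1 hb4 hb1j, folded BB]
        show ?thesis using bm by simp
      next
        case False
        then have w3: "w3 = []" using mv by simp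
        have BB: "B' = b1 @ j # w2 @ b4" "B = b1 @ w2 @ j # b4" using Bd B'_def w3 by simp_all
        have dL: "distinct (b1 @ j # w2 @ b4)" using dB' BB by simp
        note bm = block_move[OF dL b1 False w2l lb1 hb4 hb1j, folded BB]
        show ?thesis using bm sB by simp
      qed
      have oth_st: "(inv \<sigma>' y < y \<longleftrightarrow> inv \<sigma> y < y) \<and> (y < \<sigma>' y \<longleftrightarrow> y < \<sigma> y)"
        if y: "y \<in> {1..n}" "y \<noteq> j" for y
      proof -
        have "y \<in> set (concat Bs)" using s y by simp
        then obtain C where C: "C \<in> set Bs" "y \<in> set C" by auto
        then obtain i where i: "i < length Bs" "Bs ! i = C" by (auto simp: in_set_conv_nth)
        show ?thesis
        proof (cases "i = k")
          case True
          then have yB: "y \<in> set B" using C i B_def by simp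
          then show ?thesis using stB[OF yB] stB'[of y] sB BM y(2) by simp
        next
          case False
          then have C': "C \<in> set Bs'" using oth[OF False] i lk by (metis nth_mem)
          show ?thesis using stats_pb[OF d C(1) C(2)] stats_pb[OF d' C' C(2)] e e' by simp
        qed
      qed
      have jB': "j \<in> set B'" using sB jB by simp
      have pj: "inv \<sigma> j < j \<longleftrightarrow> sp B j" "j < \<sigma> j \<longleftrightarrow> sq B j" using stB[OF jB] by simp_all
      have pj': "inv \<sigma>' j < j \<longleftrightarrow> sp B' j" "j < \<sigma>' j \<longleftrightarrow> sq B' j" using stB'[OF jB'] by simp_all
      have A1: "(inv \<sigma> j < j) = (j < \<sigma> j)" using pj BM by simp
      have A2: "inv \<sigma>' j < j \<longleftrightarrow> \<not> inv \<sigma> j < j" using pj pj' BM by simp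
      have A3: "j < \<sigma>' j \<longleftrightarrow> \<not> j < \<sigma> j" using pj pj' BM by simp
      have A4: "\<forall>y\<in>{1..n}. y \<noteq> j \<longrightarrow> (inv \<sigma>' y < y \<longleftrightarrow> inv \<sigma> y < y) \<and> (y < \<sigma>' y \<longleftrightarrow> y < \<sigma> y)"
        using oth_st by blast
      show ?thesis
      proof (intro conjI disjI2)
        show "tau_c n j \<sigma>' = \<sigma>" by (rule inv1)
      qed (fact A1 cyc1 A4 A2 A3)+
    qed
  qed
qed

lemma prod_if_one: "finite S \<Longrightarrow> (\<Prod>y\<in>S. if P y then (a::real) else 1) = a ^ card {y\<in>S. P y}"
  using prod.inter_filter[of S "\<lambda>_. a" P] by simp

lemma card_split: "finite S \<Longrightarrow> card {x\<in>S. P x} = card {x\<in>S. P x \<and> R x} + card {x\<in>S. P x \<and> \<not> R x}"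
proof -
  assume f: "finite S"
  have "{x\<in>S. P x} = {x\<in>S. P x \<and> R x} \<union> {x\<in>S. P x \<and> \<not> R x}" by auto
  moreover have "{x\<in>S. P x \<and> R x} \<inter> {x\<in>S. P x \<and> \<not> R x} = {}" by auto
  ultimately show ?thesis using f by (simp add: card_Un_disjoint)
qed

lemma der_facts: assumes "\<sigma> \<in> derangements n" "x \<in> {1..n}"
  shows "\<sigma> x \<noteq> x" "inv \<sigma> x \<noteq> x" "\<sigma> x \<in> {1..n}" "inv \<sigma> x \<in> {1..n}" "\<sigma> (inv \<sigma> x) = x" "inv \<sigma> (\<sigma> x) = x"
proof -
  have perm: "\<sigma> permutes {1..n}" and der: "\<forall>i\<in>{1..n}. \<sigma> i \<noteq> i" using assms(1) by (auto simp: derangements_def)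
  show "\<sigma> x \<noteq> x" using der assms(2) by blast
  show si: "\<sigma> (inv \<sigma> x) = x" using permutes_inverses(1)[OF perm] by simp
  show "inv \<sigma> (\<sigma> x) = x" using permutes_inverses(2)[OF perm] by simp
  show "\<sigma> x \<in> {1..n}" using permutes_in_image[OF perm] assms(2) by simp
  have ii: "inv \<sigma> permutes {1..n}" by (rule permutes_inv[OF perm])
  show "inv \<sigma> x \<in> {1..n}" using permutes_in_image[OF ii] assms(2) by simp
  show "inv \<sigma> x \<noteq> x"
  proof
    assume "inv \<sigma> x = x"
    then have "\<sigma> x = x" using si by simp
    then show False using der assms(2) by blast
  qed
qed

lemma pk_vl_card: assumes \<sigma>: "\<sigma> \<in> derangements n"
  shows "card {x\<in>{1..n}. inv \<sigma> x < x \<and> \<not> x < \<sigma> x} = card {x\<in>{1..n}. \<not> inv \<sigma> x < x \<and> x < \<sigma> x}"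
proof -
  have perm: "\<sigma> permutes {1..n}" using \<sigma> by (simp add: derangements_def)
  define D where "D = {x\<in>{1..n}. \<sigma> x < x}"
  define E where "E = {x\<in>{1..n}. x < inv \<sigma> x}"
  note df = der_facts[OF \<sigma>]
  have PK: "{x\<in>{1..n}. inv \<sigma> x < x \<and> \<not> x < \<sigma> x} = D - E"
    unfolding D_def E_def using df(1,2) by (auto simp: less_le not_le)
  have VL: "{x\<in>{1..n}. \<not> inv \<sigma> x < x \<and> x < \<sigma> x} = E - D"
    unfolding D_def E_def using df(1,2) by (auto simp: less_le not_le)
  have im: "\<sigma> ` D = E"
  proof
    show "\<sigma> ` D \<subseteq> E" unfolding D_def E_def using df by auto
    show "E \<subseteq> \<sigma> ` D"
    proof
      fix y assume y: "y \<in> E"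
      then have "inv \<sigma> y \<in> D" unfolding D_def E_def using df by auto
      moreover have "y = \<sigma> (inv \<sigma> y)" using df(5) y unfolding E_def by simp
      ultimately show "y \<in> \<sigma> ` D" by blast
    qed
  qed
  have inj: "inj_on \<sigma> D" using permutes_inj[OF perm] by (simp add: inj_on_def inj_def)
  have cDE: "card D = card E" using card_image[OF inj] im by simp
  have fD: "finite D" "finite E" unfolding D_def E_def by auto
  have "card (D - E) = card D - card (D \<inter> E)" by (rule card_Diff_subset_Int) (simp add: fD)
  moreover have "card (E - D) = card E - card (E \<inter> D)" by (rule card_Diff_subset_Int) (simp add: fD)
  ultimately show ?thesis unfolding PK VL using cDE by (simp add: Int_commute)
qed

lemma tau_c_set_single: "tau_c_set n {j} = tau_c n j"
  unfolding tau_c_set_def by simp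

lemma card_split0: "finite S \<Longrightarrow> card S = card {x\<in>S. R x} + card {x\<in>S. \<not> R x}"
proof -
  assume f: "finite S"
  have "S = {x\<in>S. R x} \<union> {x\<in>S. \<not> R x}" by auto
  moreover have "{x\<in>S. R x} \<inter> {x\<in>S. \<not> R x} = {}" by auto
  ultimately show ?thesis using f by (metis (no_types, lifting) card_Un_disjoint finite_Un)
qed

lemma k2_aux: fixes a b d t :: real assumes "a \<noteq> 0" "b \<noteq> 0" "d \<noteq> 0"
  shows "(a / b) * (a / b) * (b ^ 2 * t / (d * a)) * (d / a) = t"
  using assms by (simp add: field_simps power2_eq_square)

lemma part1:
  fixes Pset :: "(nat \<Rightarrow> nat) set" and w x t :: real
  assumes Pd: "Pset \<subseteq> derangements n"
    and inv: "\<And>\<sigma> S. \<sigma> \<in> Pset \<Longrightarrow> S \<subseteq> {1..n} \<Longrightarrow> tau_c_set n S \<sigma> \<in> Pset"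
    and nz1: "x + t \<noteq> 0" and nz2: "1 + x * t \<noteq> 0" and nz3: "1 + x \<noteq> 0"
  shows "A_cyc_exc n Pset w t = ((1 + x * t) / (1 + x)) ^ n *
            P_cyc_cpk_exc n Pset w ((1 + x)^2 * t / ((x + t) * (1 + x * t))) ((x + t) / (1 + x * t))"
proof -
  define c where "c = (1 + x * t) / (1 + x)"
  define T where "T = (x + t) / (1 + x * t)"
  define Y where "Y = (1 + x)^2 * t / ((x + t) * (1 + x * t))"
  have k1: "c * T = 1 + t - c"
  proof -
    have "c * T = ((1 + x * t) * (x + t)) / ((1 + x * t) * (1 + x))"
      unfolding c_def T_def by (simp add: mult.commute)
    also have "\<dots> = (x + t) / (1 + x)" by (rule mult_divide_mult_cancel_left[OF nz2])
    also have "\<dots> = 1 + t - c" unfolding c_def using nz3 by (simp add: field_simps)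
    finally show ?thesis .
  qed
  have k2: "c * c * Y * T = t" unfolding c_def T_def Y_def using k2_aux[OF nz2 nz3 nz1] by simp
  have fin: "finite Pset"
  proof -
    have "derangements n \<subseteq> {\<sigma>. \<sigma> permutes {1..n}}" by (auto simp: derangements_def)
    moreover have "finite {\<sigma>. \<sigma> permutes {1..n::nat}}" by (rule finite_permutations) simp
    ultimately show ?thesis using Pd finite_subset by blast
  qed
  have tauP: "\<And>\<sigma> j. \<sigma> \<in> Pset \<Longrightarrow> j \<in> {1..n} \<Longrightarrow> tau_c n j \<sigma> \<in> Pset"
    using inv[of _ "{_}"] tau_c_set_single by (metis empty_subsetI insert_subset)
  define fa :: "(nat \<Rightarrow> nat) \<Rightarrow> nat \<Rightarrow> real" where "fa \<sigma> y = (if y < \<sigma> y then t else 1)" for \<sigma> y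
  define fb :: "(nat \<Rightarrow> nat) \<Rightarrow> nat \<Rightarrow> real" where
    "fb \<sigma> y = (if y < \<sigma> y \<and> inv \<sigma> y < y then c * T else if \<not> y < \<sigma> y \<and> \<not> inv \<sigma> y < y then c
       else if y < \<sigma> y then t else 1)" for \<sigma> y
  define h where "h m \<sigma> = w ^ cyc n \<sigma> * (\<Prod>y\<in>{1..n}. if y \<le> m then fb \<sigma> y else fa \<sigma> y)" for m \<sigma>
  have h0: "h 0 \<sigma> = w ^ cyc n \<sigma> * t ^ exc n \<sigma>" for \<sigma>
  proof -
    have "(\<Prod>y\<in>{1..n}. if y \<le> 0 then fb \<sigma> y else fa \<sigma> y) = (\<Prod>y\<in>{1..n}. if y < \<sigma> y then t else 1)"
      by (rule prod.cong) (auto simp: fa_def)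
    also have "\<dots> = t ^ card {y\<in>{1..n}. y < \<sigma> y}" by (rule prod_if_one) simp
    also have "\<dots> = t ^ exc n \<sigma>" unfolding exc_def by simp
    finally show ?thesis unfolding h_def by simp
  qed
  have hn: "h n \<sigma> = w ^ cyc n \<sigma> * c ^ n * Y ^ cpk n \<sigma> * T ^ exc n \<sigma>" if \<sigma>: "\<sigma> \<in> Pset" for \<sigma>
  proof -
    have der: "\<sigma> \<in> derangements n" using \<sigma> Pd by blast
    note df = der_facts[OF der]
    let ?S = "{1..n::nat}"
    define a where "a = card {y\<in>?S. y < \<sigma> y \<and> inv \<sigma> y < y}"
    define k where "k = card {y\<in>?S. y < \<sigma> y \<and> \<not> inv \<sigma> y < y}"
    define k' where "k' = card {y\<in>?S. \<not> y < \<sigma> y \<and> inv \<sigma> y < y}"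
    define b where "b = card {y\<in>?S. \<not> y < \<sigma> y \<and> \<not> inv \<sigma> y < y}"
    have kk: "k' = k"
    proof -
      have "k' = card {x\<in>?S. inv \<sigma> x < x \<and> \<not> x < \<sigma> x}" unfolding k'_def by (rule arg_cong[where f=card]) auto
      also have "\<dots> = card {x\<in>?S. \<not> inv \<sigma> x < x \<and> x < \<sigma> x}" by (rule pk_vl_card[OF der])
      also have "\<dots> = k" unfolding k_def by (rule arg_cong[where f=card]) auto
      finally show ?thesis .
    qed
    have cS: "n = a + k + k' + b"
    proof -
      have "card ?S = card {y\<in>?S. y < \<sigma> y} + card {y\<in>?S. \<not> y < \<sigma> y}"
        by (rule card_split0) simp
      moreover have "card ?S = n" by simp
      moreover have "card {y\<in>?S. y < \<sigma> y} = a + k"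
        unfolding a_def k_def by (rule card_split) simp
      moreover have "card {y\<in>?S. \<not> y < \<sigma> y} = k' + b"
        unfolding k'_def b_def by (rule card_split) simp
      ultimately show ?thesis by simp
    qed
    have ex: "exc n \<sigma> = a + k"
    proof -
      have "exc n \<sigma> = card {y\<in>?S. y < \<sigma> y}" unfolding exc_def by (rule arg_cong[where f=card]) auto
      also have "\<dots> = a + k" unfolding a_def k_def by (rule card_split) simp
      finally show ?thesis .
    qed
    have cp: "cpk n \<sigma> = k'"
    proof -
      have "{x\<in>?S. inv \<sigma> x < x \<and> x > \<sigma> x} = {y\<in>?S. \<not> y < \<sigma> y \<and> inv \<sigma> y < y}"
        using df(1) by (auto simp: not_less order_le_less)
      then show ?thesis unfolding cpk_def k'_def by simp
    qed
    have fbp: "fb \<sigma> y = (if y < \<sigma> y \<and> inv \<sigma> y < y then c * T else 1) * (if \<not> y < \<sigma> y \<and> \<not> inv \<sigma> y < y then c else 1)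
        * (if y < \<sigma> y \<and> \<not> inv \<sigma> y < y then t else 1)" for y
      unfolding fb_def by auto
    have "(\<Prod>y\<in>?S. if y \<le> n then fb \<sigma> y else fa \<sigma> y) = (\<Prod>y\<in>?S. fb \<sigma> y)"
      by (rule prod.cong) auto
    also have "\<dots> = (\<Prod>y\<in>?S. if y < \<sigma> y \<and> inv \<sigma> y < y then c * T else 1) * (\<Prod>y\<in>?S. if \<not> y < \<sigma> y \<and> \<not> inv \<sigma> y < y then c else 1)
        * (\<Prod>y\<in>?S. if y < \<sigma> y \<and> \<not> inv \<sigma> y < y then t else 1)"
      unfolding fbp by (simp add: prod.distrib)
    also have "\<dots> = (c * T) ^ a * c ^ b * t ^ k"
      unfolding a_def b_def k_def by (simp add: prod_if_one)
    also have "\<dots> = (c * c * Y * T) ^ k * (c * T) ^ a * c ^ b" using k2 by simp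
    also have "\<dots> = c ^ n * Y ^ k' * T ^ (a + k)"
      unfolding cS kk by (simp add: power_add power_mult_distrib mult_ac)
    finally show ?thesis unfolding h_def ex cp by simp
  qed
  have step: "sum (h m) Pset = sum (h (Suc m)) Pset" if m: "m < n" for m
  proof -
    define j where "j = Suc m"
    have j: "j \<in> {1..n}" using m unfolding j_def by simp
    define G where "G \<sigma> = w ^ cyc n \<sigma> * (\<Prod>y\<in>{1..n} - {j}. if y \<le> m then fb \<sigma> y else fa \<sigma> y)" for \<sigma>
    define \<epsilon> :: "(nat \<Rightarrow> nat) \<Rightarrow> real" where
      "\<epsilon> \<sigma> = (if j < \<sigma> j \<and> inv \<sigma> j < j then -1 else if \<not> j < \<sigma> j \<and> \<not> inv \<sigma> j < j then 1 else 0)" for \<sigma>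
    have hm: "h m \<sigma> = G \<sigma> * fa \<sigma> j" for \<sigma>
    proof -
      have "(\<Prod>y\<in>{1..n}. if y \<le> m then fb \<sigma> y else fa \<sigma> y)
          = (if j \<le> m then fb \<sigma> j else fa \<sigma> j) * (\<Prod>y\<in>{1..n} - {j}. if y \<le> m then fb \<sigma> y else fa \<sigma> y)"
        by (rule prod.remove) (simp, fact j)
      then show ?thesis unfolding h_def G_def j_def by simp
    qed
    have hs: "h (Suc m) \<sigma> = G \<sigma> * fb \<sigma> j" for \<sigma>
    proof -
      have "(\<Prod>y\<in>{1..n}. if y \<le> Suc m then fb \<sigma> y else fa \<sigma> y)
          = (if j \<le> Suc m then fb \<sigma> j else fa \<sigma> j) * (\<Prod>y\<in>{1..n} - {j}. if y \<le> Suc m then fb \<sigma> y else fa \<sigma> y)"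
        by (rule prod.remove) (simp, fact j)
      also have "(\<Prod>y\<in>{1..n} - {j}. if y \<le> Suc m then fb \<sigma> y else fa \<sigma> y) = (\<Prod>y\<in>{1..n} - {j}. if y \<le> m then fb \<sigma> y else fa \<sigma> y)"
        by (rule prod.cong) (auto simp: j_def le_Suc_eq)
      finally show ?thesis unfolding h_def G_def j_def by simp
    qed
    have dfe: "fb \<sigma> j - fa \<sigma> j = (c - 1) * \<epsilon> \<sigma>" for \<sigma>
      unfolding fb_def fa_def \<epsilon>_def using k1 by (auto simp: algebra_simps)
    define \<tau> where "\<tau> = tau_c n j"
    have neg: "G (\<tau> \<sigma>) * \<epsilon> (\<tau> \<sigma>) = - (G \<sigma> * \<epsilon> \<sigma>)" and tt: "\<tau> (\<tau> \<sigma>) = \<sigma>" if \<sigma>: "\<sigma> \<in> Pset" for \<sigma>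
    proof -
      have der: "\<sigma> \<in> derangements n" using \<sigma> Pd by blast
      note ms = main_step[OF der j, folded \<tau>_def]
      show "\<tau> (\<tau> \<sigma>) = \<sigma>" using ms by blast
      from ms have "((inv \<sigma> j < j) \<noteq> (j < \<sigma> j) \<and> \<tau> \<sigma> = \<sigma>) \<or>
     ((inv \<sigma> j < j) = (j < \<sigma> j) \<and> cyc n (\<tau> \<sigma>) = cyc n \<sigma> \<and>
      (\<forall>y\<in>{1..n}. y \<noteq> j \<longrightarrow> (inv (\<tau> \<sigma>) y < y \<longleftrightarrow> inv \<sigma> y < y) \<and> (y < (\<tau> \<sigma>) y \<longleftrightarrow> y < \<sigma> y)) \<and>
      (inv (\<tau> \<sigma>) j < j \<longleftrightarrow> \<not> inv \<sigma> j < j) \<and> (j < (\<tau> \<sigma>) j \<longleftrightarrow> \<not> j < \<sigma> j))" by blast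
      then show "G (\<tau> \<sigma>) * \<epsilon> (\<tau> \<sigma>) = - (G \<sigma> * \<epsilon> \<sigma>)"
      proof
        assume A: "(inv \<sigma> j < j) \<noteq> (j < \<sigma> j) \<and> \<tau> \<sigma> = \<sigma>"
        then have "\<epsilon> \<sigma> = 0" unfolding \<epsilon>_def by auto
        then show ?thesis using A by simp
      next
        assume B: "(inv \<sigma> j < j) = (j < \<sigma> j) \<and> cyc n (\<tau> \<sigma>) = cyc n \<sigma> \<and>
      (\<forall>y\<in>{1..n}. y \<noteq> j \<longrightarrow> (inv (\<tau> \<sigma>) y < y \<longleftrightarrow> inv \<sigma> y < y) \<and> (y < (\<tau> \<sigma>) y \<longleftrightarrow> y < \<sigma> y)) \<and>
      (inv (\<tau> \<sigma>) j < j \<longleftrightarrow> \<not> inv \<sigma> j < j) \<and> (j < (\<tau> \<sigma>) j \<longleftrightarrow> \<not> j < \<sigma> j)"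
        have "(\<Prod>y\<in>{1..n} - {j}. if y \<le> m then fb (\<tau> \<sigma>) y else fa (\<tau> \<sigma>) y) = (\<Prod>y\<in>{1..n} - {j}. if y \<le> m then fb \<sigma> y else fa \<sigma> y)"
        proof (rule prod.cong)
          fix y assume y: "y \<in> {1..n} - {j}"
          then have "(inv (\<tau> \<sigma>) y < y \<longleftrightarrow> inv \<sigma> y < y) \<and> (y < (\<tau> \<sigma>) y \<longleftrightarrow> y < \<sigma> y)" using B by blast
          then show "(if y \<le> m then fb (\<tau> \<sigma>) y else fa (\<tau> \<sigma>) y) = (if y \<le> m then fb \<sigma> y else fa \<sigma> y)"
            unfolding fb_def fa_def by simp
        qed simp
        then have "G (\<tau> \<sigma>) = G \<sigma>" unfolding G_def using B by simp
        moreover have "\<epsilon> (\<tau> \<sigma>) = - \<epsilon> \<sigma>" unfolding \<epsilon>_def using B by auto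
        ultimately show ?thesis by simp
      qed
    qed
    have "(\<Sum>\<sigma>\<in>Pset. G \<sigma> * \<epsilon> \<sigma>) = (\<Sum>\<sigma>\<in>Pset. G (\<tau> \<sigma>) * \<epsilon> (\<tau> \<sigma>))"
    proof (rule sum.reindex_bij_witness[of Pset \<tau> \<tau>])
      fix a assume a: "a \<in> Pset"
      show "\<tau> (\<tau> a) = a" by (rule tt[OF a])
      show "\<tau> a \<in> Pset" unfolding \<tau>_def by (rule tauP[OF a j])
      show "G (\<tau> (\<tau> a)) * \<epsilon> (\<tau> (\<tau> a)) = G a * \<epsilon> a" using tt[OF a] by simp
    next
      fix b assume b: "b \<in> Pset"
      show "\<tau> (\<tau> b) = b" by (rule tt[OF b])
      show "\<tau> b \<in> Pset" unfolding \<tau>_def by (rule tauP[OF b j])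
    qed
    also have "\<dots> = (\<Sum>\<sigma>\<in>Pset. - (G \<sigma> * \<epsilon> \<sigma>))" by (rule sum.cong) (simp_all add: neg)
    also have "\<dots> = - (\<Sum>\<sigma>\<in>Pset. G \<sigma> * \<epsilon> \<sigma>)" by (simp add: sum_negf)
    finally have z: "(\<Sum>\<sigma>\<in>Pset. G \<sigma> * \<epsilon> \<sigma>) = 0" by simp
    have "sum (h (Suc m)) Pset - sum (h m) Pset = (\<Sum>\<sigma>\<in>Pset. G \<sigma> * (fb \<sigma> j - fa \<sigma> j))"
      unfolding hm hs by (simp add: sum_subtractf[symmetric] algebra_simps)
    also have "\<dots> = (c - 1) * (\<Sum>\<sigma>\<in>Pset. G \<sigma> * \<epsilon> \<sigma>)"
      unfolding dfe by (simp add: sum_distrib_left mult_ac)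
    also have "\<dots> = 0" using z by simp
    finally show ?thesis by simp
  qed
  have all: "m \<le> n \<Longrightarrow> sum (h 0) Pset = sum (h m) Pset" for m
  proof (induction m)
    case 0 then show ?case by simp
  next
    case (Suc m) then show ?case using step[of m] by simp
  qed
  have "A_cyc_exc n Pset w t = sum (h 0) Pset" unfolding A_cyc_exc_def h0 ..
  also have "\<dots> = sum (h n) Pset" using all by simp
  also have "\<dots> = (\<Sum>\<sigma>\<in>Pset. c ^ n * (w ^ cyc n \<sigma> * Y ^ cpk n \<sigma> * T ^ exc n \<sigma>))"
    by (rule sum.cong) (simp_all add: hn mult_ac)
  also have "\<dots> = c ^ n * P_cyc_cpk_exc n Pset w Y T"
    unfolding P_cyc_cpk_exc_def by (simp add: sum_distrib_left)
  finally show ?thesis unfolding c_def Y_def T_def .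
qed

lemma alg_uv: fixes x t s u v :: real
  assumes s2: "s^2 = (1+t)^2 - 4*x*t" and x0: "x \<noteq> 0" and x1: "x \<noteq> 1" and t0: "t \<noteq> 0"
  and u: "u = (1 + t^2 - 2*x*t - (1-t) * s) / (2*(1-x)*t)"
  and v: "v = ((1+t)^2 - 2*x*t - (1+t) * s) / (2*x*t)"
  and h2: "1 + u * v \<noteq> 0" and h3: "u + v \<noteq> 0"
  shows "(u + v) / (1 + u * v) = t" "(1 + u)^2 * v / ((u + v) * (1 + u * v)) = x"
proof -
  define U where "U = 1 + t^2 - 2*x*t - (1-t) * s"
  define V where "V = (1+t)^2 - 2*x*t - (1+t) * s"
  have a1: "2*(x*U + (1-x)*V) = 4*x*(1-x)*t^2 + U*V" unfolding U_def V_def using s2 by algebra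
  have a2: "2*(2*(1-x)*t + U)^2*V = (4*x*(1-x)*t^2 + U*V)^2" unfolding U_def V_def using s2 by algebra
  have A: "2*(1-x)*t \<noteq> 0" "2*x*t \<noteq> 0" using x0 x1 t0 by auto
  have uU: "U = u * (2*(1-x)*t)" unfolding U_def u using A(1) by simp
  have vV: "V = v * (2*x*t)" unfolding V_def v using A(2) by simp
  have e1: "u + v = t * (1 + u * v)"
  proof -
    have "(4*x*(1-x)*t) * ((u + v) - t * (1 + u * v)) = 0" using a1 unfolding uU vV by algebra
    moreover have "4*x*(1-x)*t \<noteq> 0" using x0 x1 t0 by simp
    ultimately show ?thesis by simp
  qed
  show "(u + v) / (1 + u * v) = t" using e1 h2 by simp
  have e2: "(1 + u)^2 * v = x * t * (1 + u * v)^2"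
  proof -
    have "(8*(1-x)^2*t^2*x*t) * ((1 + u)^2 * v - x * t * (1 + u * v)^2) = 0" using a2 unfolding uU vV by algebra
    moreover have "8*(1-x)^2*t^2*x*t \<noteq> 0" using x0 x1 t0 by simp
    ultimately show ?thesis by simp
  qed
  have "(1 + u)^2 * v / ((u + v) * (1 + u * v)) = (x * t * (1 + u * v)^2) / ((t * (1 + u * v)) * (1 + u * v))"
    unfolding e2 e1 ..
  also have "\<dots> = x" using h2 t0 by (simp add: power2_eq_square)
  finally show "(1 + u)^2 * v / ((u + v) * (1 + u * v)) = x" .
qed

theorem theorem4p2:
  fixes n :: nat and Pset :: "(nat \<Rightarrow> nat) set"
  assumes "n \<ge> 1"
    and "Pset \<subseteq> derangements n"
    and "\<And>\<sigma> S. \<sigma> \<in> Pset \<Longrightarrow> S \<subseteq> {1..n} \<Longrightarrow> tau_c_set n S \<sigma> \<in> Pset"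
  shows "(\<forall>w x t :: real. x + t \<noteq> 0 \<longrightarrow> 1 + x * t \<noteq> 0 \<longrightarrow> 1 + x \<noteq> 0 \<longrightarrow>
            A_cyc_exc n Pset w t =
            ((1 + x * t) / (1 + x)) ^ n *
            P_cyc_cpk_exc n Pset w ((1 + x)^2 * t / ((x + t) * (1 + x * t))) ((x + t) / (1 + x * t)))
       \<and> (\<forall>w x t :: real. x \<noteq> 0 \<longrightarrow> x \<noteq> 1 \<longrightarrow> t \<noteq> 0 \<longrightarrow> (1 + t)^2 - 4 * x * t \<ge> 0 \<longrightarrow>
            (let s = sqrt ((1 + t)^2 - 4 * x * t);
                 u = (1 + t^2 - 2 * x * t - (1 - t) * s) / (2 * (1 - x) * t);
                 v = ((1 + t)^2 - 2 * x * t - (1 + t) * s) / (2 * x * t)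
             in 1 + u \<noteq> 0 \<longrightarrow> 1 + u * v \<noteq> 0 \<longrightarrow> u + v \<noteq> 0 \<longrightarrow>
                P_cyc_cpk_exc n Pset w x t = ((1 + u) / (1 + u * v)) ^ n * A_cyc_exc n Pset w v))"
  proof (intro conjI allI impI)
  fix w x t :: real
  assume h: "x + t \<noteq> 0" "1 + x * t \<noteq> 0" "1 + x \<noteq> 0"
  show "A_cyc_exc n Pset w t =
            ((1 + x * t) / (1 + x)) ^ n *
            P_cyc_cpk_exc n Pset w ((1 + x)^2 * t / ((x + t) * (1 + x * t))) ((x + t) / (1 + x * t))"
    by (rule part1[OF assms(2) assms(3) h])
next
  fix w x t :: real
  assume x0: "x \<noteq> 0" and x1: "x \<noteq> 1" and t0: "t \<noteq> 0" and D: "(1 + t)^2 - 4 * x * t \<ge> 0"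
  define s where "s = sqrt ((1 + t)^2 - 4 * x * t)"
  define u where "u = (1 + t^2 - 2 * x * t - (1 - t) * s) / (2 * (1 - x) * t)"
  define v where "v = ((1 + t)^2 - 2 * x * t - (1 + t) * s) / (2 * x * t)"
  have s2: "s^2 = (1 + t)^2 - 4 * x * t" unfolding s_def using D by simp
  have main: "P_cyc_cpk_exc n Pset w x t = ((1 + u) / (1 + u * v)) ^ n * A_cyc_exc n Pset w v"
    if h1: "1 + u \<noteq> 0" and h2: "1 + u * v \<noteq> 0" and h3: "u + v \<noteq> 0"
  proof -
    have T: "(u + v) / (1 + u * v) = t" and Y: "(1 + u)^2 * v / ((u + v) * (1 + u * v)) = x"
      using alg_uv[OF s2 x0 x1 t0 u_def v_def h2 h3] by simp_all
    have "A_cyc_exc n Pset w v = ((1 + u * v) / (1 + u)) ^ n *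
            P_cyc_cpk_exc n Pset w ((1 + u)^2 * v / ((u + v) * (1 + u * v))) ((u + v) / (1 + u * v))"
      by (rule part1[OF assms(2) assms(3) h3 h2 h1])
    then have eA: "A_cyc_exc n Pset w v = ((1 + u * v) / (1 + u)) ^ n * P_cyc_cpk_exc n Pset w x t"
      unfolding T Y .
    have one: "((1 + u) / (1 + u * v)) ^ n * ((1 + u * v) / (1 + u)) ^ n = 1"
      using h1 h2 by (simp add: power_mult_distrib[symmetric])
    show ?thesis unfolding eA by (simp add: mult.assoc[symmetric] one)
  qed
  show "let s = sqrt ((1 + t)^2 - 4 * x * t);
                 u = (1 + t^2 - 2 * x * t - (1 - t) * s) / (2 * (1 - x) * t);
                 v = ((1 + t)^2 - 2 * x * t - (1 + t) * s) / (2 * x * t)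
             in 1 + u \<noteq> 0 \<longrightarrow> 1 + u * v \<noteq> 0 \<longrightarrow> u + v \<noteq> 0 \<longrightarrow>
                P_cyc_cpk_exc n Pset w x t = ((1 + u) / (1 + u * v)) ^ n * A_cyc_exc n Pset w v"
    unfolding Let_def s_def[symmetric] u_def[symmetric] v_def[symmetric] using main by blast
qed

end
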